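(* Let $\Omega_1\subset\Omega_2\subset\mathbb C$ be Borel sets. Then $i(\Omega_2,\Omega_1)(E\Lambda(\Omega_1))\subset E\Lambda(\Omega_2)$, and $i(\Omega_2,\Omega_1)$ restricted to $E\Lambda(\Omega_1)$ is isometric both for the $\||\cdot\||$-norms and for the $\||\cdot\||_1$-norms, and preserves $L(\cdot)$ and $L_1(\cdot)$. Moreover $\varepsilon(\Omega_1,\Omega_2)(E\Lambda(\Omega_2))=E\Lambda(\Omega_1)$, $\varepsilon(\Omega_1,\Omega_2)$ is contractive both in the $\||\cdot\||$-norms and in the $\||\cdot\||_1$-norms, and $\varepsilon(\Omega_1,\Omega_2)\,i(\Omega_2,\Omega_1)(T)=T$ for all $T$.
   Context: $\lambda$ is Lebesgue measure; $|X|_2$ is the Hilbert–Schmidt norm ($+\infty$ if not Hilbert–Schmidt). For a Borel set $\Omega$ and $f\in L^\infty(\Omega,\lambda)$, $M_f$ is multiplication by $f$ on $L^2(\Omega,\lambda)$, $Df(s,t)=\frac{f(s)-f(t)}{s-t}$, $\Lambda(\Omega)=\{f\in L^\infty(\Omega): Df\in L^\infty(\Omega\times\Omega)\}$, $L(T)=\sup\{|[M_f,T]|_2: f\in\Lambda(\Omega),\|Df\|_\infty\le1\}$, $E\Lambda(\Omega)=\{T\in\mathcal B(L^2(\Omega,\lambda)):L(T)<\infty\}$ with norm $\||T\||=\|T\|+L(T)$. With $e(w)(z)=\exp(i\,\mathrm{Re}(z\bar w))$ and $U(w)=M_{e(w)}$, $L_1(T)=\sup_{w\ne0}|w|^{-1}|[T,U(w)]|_2$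 and $\||T\||_1=\|T\|+L_1(T)$. For $\Omega_1\subset\Omega_2$, $i(\Omega_2,\Omega_1):\mathcal B(L^2(\Omega_1,\lambda))\to\mathcal B(L^2(\Omega_2,\lambda))$ is $T\mapsto T\oplus0$ with respect to $L^2(\Omega_2)=L^2(\Omega_1)\oplus L^2(\Omega_2\setminus\Omega_1)$, and $\varepsilon(\Omega_1,\Omega_2):\mathcal B(L^2(\Omega_2,\lambda))\to\mathcal B(L^2(\Omega_1,\lambda))$ is $S\mapsto M_{\chi_{\Omega_1}}SM_{\chi_{\Omega_1}}|_{L^2(\Omega_1,\lambda)}$, $\chi_{\Omega_1}$ the indicator of $\Omega_1$. *)

theory Defs
  imports "HOL-Analysis.Analysis"
begin

text \<open>Functions on the complex plane; Lebesgue measure is lborel on complex (2-dim).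
 Elements of L2(Omega) are represented by square-integrable Borel functions that
 vanish (exactly) outside Omega; operators by maps on such representatives.\<close>

definition L2 :: "complex set \<Rightarrow> (complex \<Rightarrow> complex) set" where
  "L2 \<Omega> = {f. f \<in> borel_measurable lborel \<and> (\<forall>x. x \<notin> \<Omega> \<longrightarrow> f x = 0)
              \<and> integrable lborel (\<lambda>x. (cmod (f x))^2)}"

definition l2norm :: "(complex \<Rightarrow> complex) \<Rightarrow> real" where
  "l2norm f = sqrt (integral\<^sup>L lborel (\<lambda>x. (cmod (f x))^2))"

definition ip :: "(complex \<Rightarrow> complex) \<Rightarrow> (complex \<Rightarrow> complex) \<Rightarrow> complex" where
  "ip f g = integral\<^sup>L lborel (\<lambda>x. f x * cnj (g x))"

type_synonym op = "(complex \<Rightarrow> complex) \<Rightarrow> (complex \<Rightarrow> complex)"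

definition bop :: "complex set \<Rightarrow> op \<Rightarrow> bool" where
  "bop \<Omega> T \<longleftrightarrow>
     (\<forall>f\<in>L2 \<Omega>. T f \<in> L2 \<Omega>) \<and>
     (\<forall>f\<in>L2 \<Omega>. \<forall>g\<in>L2 \<Omega>. (AE x in lborel. f x = g x) \<longrightarrow> (AE x in lborel. T f x = T g x)) \<and>
     (\<forall>f\<in>L2 \<Omega>. \<forall>g\<in>L2 \<Omega>. \<forall>a b::complex.
         AE x in lborel. T (\<lambda>y. a * f y + b * g y) x = a * T f x + b * T g x) \<and>
     (\<exists>K. \<forall>f\<in>L2 \<Omega>. l2norm (T f) \<le> K * l2norm f)"

definition op_eq :: "complex set \<Rightarrow> op \<Rightarrow> op \<Rightarrow> bool" where
  "op_eq \<Omega> T S \<longleftrightarrow> (\<forall>f\<in>L2 \<Omega>. AE x in lborel. T f x = S f x)"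

definition opnorm :: "complex set \<Rightarrow> op \<Rightarrow> real" where
  "opnorm \<Omega> T = Sup ((\<lambda>f. l2norm (T f)) ` {f \<in> L2 \<Omega>. l2norm f \<le> 1})"

definition orthonormal :: "(complex \<Rightarrow> complex) set \<Rightarrow> bool" where
  "orthonormal S \<longleftrightarrow> (\<forall>e\<in>S. ip e e = 1) \<and> (\<forall>e\<in>S. \<forall>d\<in>S. e \<noteq> d \<longrightarrow> ip e d = 0)"

text \<open>Hilbert-Schmidt norm (infinity if not Hilbert-Schmidt): supremum over finite
 orthonormal families of (sum of squared norms of images)^(1/2).\<close>
definition hs_norm :: "complex set \<Rightarrow> op \<Rightarrow> ennreal" where
  "hs_norm \<Omega> X = (SUP S \<in> {S. finite S \<and> S \<subseteq> L2 \<Omega> \<and> orthonormal S}.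
                     ennreal (sqrt (\<Sum>e\<in>S. (l2norm (X e))^2)))"

definition Linf :: "complex set \<Rightarrow> (complex \<Rightarrow> complex) \<Rightarrow> bool" where
  "Linf \<Omega> f \<longleftrightarrow> f \<in> borel_measurable lborel \<and>
     (\<exists>B. AE x in lborel. x \<in> \<Omega> \<longrightarrow> cmod (f x) \<le> B)"

text \<open>f in Lambda(Omega) with ||Df||_infty \<le> 1 (the diagonal is a null set).\<close>
definition Lip1 :: "complex set \<Rightarrow> (complex \<Rightarrow> complex) \<Rightarrow> bool" where
  "Lip1 \<Omega> f \<longleftrightarrow> Linf \<Omega> f \<and>
     (AE p in (lborel \<Otimes>\<^sub>M lborel). fst p \<in> \<Omega> \<and> snd p \<in> \<Omega> \<longrightarrow>
         cmod (f (fst p) - f (snd p)) \<le> cmod (fst p - snd p))"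

definition Mult :: "(complex \<Rightarrow> complex) \<Rightarrow> op" where
  "Mult f = (\<lambda>g x. f x * g x)"

definition commut :: "op \<Rightarrow> op \<Rightarrow> op" where
  "commut A B = (\<lambda>g x. A (B g) x - B (A g) x)"

definition LL :: "complex set \<Rightarrow> op \<Rightarrow> ennreal" where
  "LL \<Omega> T = (SUP f \<in> {f. Lip1 \<Omega> f}. hs_norm \<Omega> (commut (Mult f) T))"

definition EL :: "complex set \<Rightarrow> op set" where
  "EL \<Omega> = {T. bop \<Omega> T \<and> LL \<Omega> T < \<infinity>}"

definition tnorm :: "complex set \<Rightarrow> op \<Rightarrow> ennreal" where
  "tnorm \<Omega> T = ennreal (opnorm \<Omega> T) + LL \<Omega> T"

definition ee :: "complex \<Rightarrow> complex \<Rightarrow> complex" where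
  "ee w z = exp (\<i> * of_real (Re (z * cnj w)))"

definition UU :: "complex \<Rightarrow> op" where
  "UU w = Mult (ee w)"

definition LL1 :: "complex set \<Rightarrow> op \<Rightarrow> ennreal" where
  "LL1 \<Omega> T = (SUP w \<in> {w. w \<noteq> 0}. ennreal (1 / cmod w) * hs_norm \<Omega> (commut T (UU w)))"

definition tnorm1 :: "complex set \<Rightarrow> op \<Rightarrow> ennreal" where
  "tnorm1 \<Omega> T = ennreal (opnorm \<Omega> T) + LL1 \<Omega> T"

text \<open>i(Omega2,Omega1): T \<mapsto> T \<oplus> 0.\<close>
definition iop :: "complex set \<Rightarrow> complex set \<Rightarrow> op \<Rightarrow> op" where
  "iop \<Omega>2 \<Omega>1 T = (\<lambda>g. T (\<lambda>y. indicator \<Omega>1 y * g y))"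

text \<open>epsilon(Omega1,Omega2): S \<mapsto> M_chi S M_chi restricted to L2(Omega1).\<close>
definition eop :: "complex set \<Rightarrow> complex set \<Rightarrow> op \<Rightarrow> op" where
  "eop \<Omega>1 \<Omega>2 S = (\<lambda>f x. indicator \<Omega>1 x * S (\<lambda>y. indicator \<Omega>1 y * f y) x)"

end

theory Submission
  imports Defs
begin


lemma L2_meas: "f \<in> L2 \<Omega> \<Longrightarrow> f \<in> borel_measurable lborel" by (simp add: L2_def)
lemma L2_zero_out: "f \<in> L2 \<Omega> \<Longrightarrow> x \<notin> \<Omega> \<Longrightarrow> f x = 0" by (simp add: L2_def)
lemma L2_int: "f \<in> L2 \<Omega> \<Longrightarrow> integrable lborel (\<lambda>x. (cmod (f x))^2)" by (simp add: L2_def)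

lemma meas_cnj[measurable]: "g \<in> borel_measurable M \<Longrightarrow> (\<lambda>x. cnj (g x)) \<in> borel_measurable M"
  by (rule borel_measurable_continuous_on[where f=cnj]) (auto intro: continuous_intros)

lemma L2_ip_int:
  assumes "f \<in> L2 \<Omega>" "g \<in> L2 \<Omega>"
  shows "integrable lborel (\<lambda>x. f x * cnj (g x))"
proof (rule Bochner_Integration.integrable_bound)
  show "integrable lborel (\<lambda>x. (cmod (f x))^2 + (cmod (g x))^2)"
    using assms by (auto intro!: Bochner_Integration.integrable_add simp: L2_def)
  show "(\<lambda>x. f x * cnj (g x)) \<in> borel_measurable lborel" using assms unfolding L2_def by (intro borel_measurable_times meas_cnj) auto
  show "AE x in lborel. norm (f x * cnj (g x)) \<le> norm ((cmod (f x))^2 + (cmod (g x))^2)"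
  proof (intro AE_I2)
    fix x
    have "cmod (f x) * cmod (g x) \<le> (cmod (f x))^2 + (cmod (g x))^2"
      using sum_squares_bound[of "cmod (f x)" "cmod (g x)"] mult_nonneg_nonneg[OF norm_ge_zero norm_ge_zero, of "f x" "g x"] by linarith
    then show "norm (f x * cnj (g x)) \<le> norm ((cmod (f x))^2 + (cmod (g x))^2)"
      by (simp add: norm_mult)
  qed
qed

lemma L2_add: "f \<in> L2 \<Omega> \<Longrightarrow> g \<in> L2 \<Omega> \<Longrightarrow> (\<lambda>x. f x + g x) \<in> L2 \<Omega>"
proof -
  assume f: "f \<in> L2 \<Omega>" and g: "g \<in> L2 \<Omega>"
  have "integrable lborel (\<lambda>x. (cmod (f x + g x))^2)"
  proof (rule Bochner_Integration.integrable_bound)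
    show "integrable lborel (\<lambda>x. 2*(cmod (f x))^2 + 2*(cmod (g x))^2)"
      using f g by (auto intro!: Bochner_Integration.integrable_add simp: L2_def)
    show "(\<lambda>x. (cmod (f x + g x))^2) \<in> borel_measurable lborel" using f g by (auto simp: L2_def)
    show "AE x in lborel. norm ((cmod (f x + g x))^2) \<le> norm (2*(cmod (f x))^2 + 2*(cmod (g x))^2)"
    proof (intro AE_I2)
      fix x
      have "cmod (f x + g x) \<le> cmod (f x) + cmod (g x)" by (rule norm_triangle_ineq)
      hence "(cmod (f x + g x))^2 \<le> (cmod (f x) + cmod (g x))^2"
        by (simp add: power_mono)
      also have "\<dots> \<le> 2*(cmod (f x))^2 + 2*(cmod (g x))^2"
        using sum_squares_bound[of "cmod (f x)" "cmod (g x)"] power2_sum[of "cmod (f x)" "cmod (g x)"] by linarith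
      finally show "norm ((cmod (f x + g x))^2) \<le> norm (2*(cmod (f x))^2 + 2*(cmod (g x))^2)" by simp
    qed
  qed
  then show ?thesis using f g by (auto simp: L2_def)
qed

lemma L2_scale: "f \<in> L2 \<Omega> \<Longrightarrow> (\<lambda>x. c * f x) \<in> L2 \<Omega>"
  by (auto simp: L2_def norm_mult power_mult_distrib intro!: integrable_mult_right)

lemma L2_zero: "(\<lambda>x. 0) \<in> L2 \<Omega>" by (simp add: L2_def)

lemma L2_sum: "finite U \<Longrightarrow> (\<And>u. u \<in> U \<Longrightarrow> h u \<in> L2 \<Omega>) \<Longrightarrow> (\<lambda>x. \<Sum>u\<in>U. c u * h u x) \<in> L2 \<Omega>"
proof (induction U rule: finite_induct)
  case empty then show ?case by (simp add: L2_zero)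
next
  case (insert a U)
  have "(\<lambda>x. c a * h a x + (\<Sum>u\<in>U. c u * h u x)) \<in> L2 \<Omega>"
    using insert by (intro L2_add L2_scale) auto
  then show ?case using insert by simp
qed

lemma L2_mono: "\<Omega>1 \<subseteq> \<Omega>2 \<Longrightarrow> L2 \<Omega>1 \<subseteq> L2 \<Omega>2" by (auto simp: L2_def)

lemma L2_ind: assumes "\<Omega>1 \<in> sets borel" "f \<in> L2 \<Omega>2"
  shows "(\<lambda>y. indicator \<Omega>1 y * f y) \<in> L2 \<Omega>1"
proof -
  have "(\<lambda>y. (cmod (indicator \<Omega>1 y * f y))^2) = (\<lambda>y. (cmod (f y))^2 * indicator \<Omega>1 y)"
    by (auto simp: indicator_def)
  moreover have "integrable lborel (\<lambda>y. (cmod (f y))^2 * indicator \<Omega>1 y)"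
    using assms by (intro integrable_real_mult_indicator) (auto simp: L2_def)
  ultimately show ?thesis using assms by (auto simp: L2_def)
qed

lemma ind_L2_id: "f \<in> L2 \<Omega> \<Longrightarrow> (\<lambda>y. indicator \<Omega> y * f y) = f"
proof
  fix y assume "f \<in> L2 \<Omega>"
  then show "indicator \<Omega> y * f y = f y" by (cases "y \<in> \<Omega>") (auto simp: L2_def)
qed



definition nrm2 :: "(complex \<Rightarrow> complex) \<Rightarrow> real" where
  "nrm2 f = integral\<^sup>L lborel (\<lambda>x. (cmod (f x))^2)"

lemma ip_cnj: "ip g f = cnj (ip f g)"
  unfolding ip_def by (subst Bochner_Integration.integral_cnj[symmetric]) (simp add: mult.commute)

lemma ip_add_left: "f \<in> L2 \<Omega> \<Longrightarrow> f' \<in> L2 \<Omega> \<Longrightarrow> g \<in> L2 \<Omega> \<Longrightarrow>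
   ip (\<lambda>x. f x + f' x) g = ip f g + ip f' g"
  unfolding ip_def using L2_ip_int[of f \<Omega> g] L2_ip_int[of f' \<Omega> g]
  by (simp add: distrib_right)

lemma ip_scale_left: "ip (\<lambda>x. c * f x) g = c * ip f g"
  unfolding ip_def by (simp add: mult.assoc)

lemma ip_sum_left:
  assumes "finite U" "\<And>u. u \<in> U \<Longrightarrow> h u \<in> L2 \<Omega>" "g \<in> L2 \<Omega>"
  shows "ip (\<lambda>x. \<Sum>u\<in>U. c u * h u x) g = (\<Sum>u\<in>U. c u * ip (h u) g)"
  using assms
proof (induction U rule: finite_induct)
  case empty then show ?case by (simp add: ip_def)
next
  case (insert a U)
  have "ip (\<lambda>x. \<Sum>u\<in>insert a U. c u * h u x) g = ip (\<lambda>x. c a * h a x + (\<Sum>u\<in>U. c u * h u x)) g"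
    using insert by simp
  also have "\<dots> = ip (\<lambda>x. c a * h a x) g + ip (\<lambda>x. \<Sum>u\<in>U. c u * h u x) g"
    using insert by (intro ip_add_left[where \<Omega>=\<Omega>] L2_scale L2_sum) auto
  also have "\<dots> = (\<Sum>u\<in>insert a U. c u * ip (h u) g)"
    using insert by (simp add: ip_scale_left)
  finally show ?case .
qed

lemma ip_sum_right:
  assumes "finite U" "\<And>u. u \<in> U \<Longrightarrow> h u \<in> L2 \<Omega>" "g \<in> L2 \<Omega>"
  shows "ip g (\<lambda>x. \<Sum>u\<in>U. c u * h u x) = (\<Sum>u\<in>U. cnj (c u) * ip g (h u))"
proof -
  have "ip g (\<lambda>x. \<Sum>u\<in>U. c u * h u x) = cnj (\<Sum>u\<in>U. c u * ip (h u) g)"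
    by (subst ip_cnj) (simp add: ip_sum_left[OF assms])
  also have "\<dots> = (\<Sum>u\<in>U. cnj (c u) * ip g (h u))"
    by (simp add: ip_cnj[of g])
  finally show ?thesis .
qed

lemma ip_self: "ip f f = complex_of_real (nrm2 f)"
proof -
  have e: "(\<lambda>x. f x * cnj (f x)) = (\<lambda>x. complex_of_real ((cmod (f x))^2))"
    by (metis complex_norm_square of_real_power)
  show ?thesis unfolding ip_def nrm2_def e by (rule integral_complex_of_real)
qed

lemma nrm2_nonneg: "nrm2 f \<ge> 0"
  unfolding nrm2_def by simp

lemma l2norm_sq: "(l2norm f)^2 = nrm2 f"
  unfolding l2norm_def nrm2_def by simp

lemma l2norm_nonneg: "l2norm f \<ge> 0" unfolding l2norm_def by simp

lemma ip_AE_left: "f \<in> borel_measurable lborel \<Longrightarrow> f' \<in> borel_measurable lborel \<Longrightarrow>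
   g \<in> borel_measurable lborel \<Longrightarrow> (AE x in lborel. f x = f' x) \<Longrightarrow> ip f g = ip f' g"
  unfolding ip_def by (rule integral_cong_AE) auto

lemma ip_AE_right: "f \<in> borel_measurable lborel \<Longrightarrow> f' \<in> borel_measurable lborel \<Longrightarrow>
   g \<in> borel_measurable lborel \<Longrightarrow> (AE x in lborel. f x = f' x) \<Longrightarrow> ip g f = ip g f'"
  unfolding ip_def by (rule integral_cong_AE) auto

lemma nrm2_AE: "f \<in> borel_measurable lborel \<Longrightarrow> f' \<in> borel_measurable lborel \<Longrightarrow>
   (AE x in lborel. f x = f' x) \<Longrightarrow> nrm2 f = nrm2 f'"
  unfolding nrm2_def by (rule integral_cong_AE) auto

lemma nrm2_zero_AE: assumes "f \<in> L2 \<Omega>" "nrm2 f = 0" shows "AE x in lborel. f x = 0"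
proof -
  have "AE x in lborel. (cmod (f x))^2 = 0"
    using assms integral_nonneg_eq_0_iff_AE[of lborel "\<lambda>x. (cmod (f x))^2"]
    by (auto simp: nrm2_def L2_def)
  then show ?thesis by simp
qed



lemma L2_diff: "f \<in> L2 \<Omega> \<Longrightarrow> g \<in> L2 \<Omega> \<Longrightarrow> (\<lambda>x. f x - g x) \<in> L2 \<Omega>"
  using L2_add[of f \<Omega> "\<lambda>x. (-1) * g x"] L2_scale[of g \<Omega> "-1"] by simp

lemma ip_diff_left: "f \<in> L2 \<Omega> \<Longrightarrow> f' \<in> L2 \<Omega> \<Longrightarrow> g \<in> L2 \<Omega> \<Longrightarrow>
   ip (\<lambda>x. f x - f' x) g = ip f g - ip f' g"
  using ip_add_left[of f \<Omega> "\<lambda>x. (-1) * f' x" g] L2_scale[of f' \<Omega> "-1"] ip_scale_left[of "-1" f' g]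
  by simp

lemma ip_scale_right: "ip g (\<lambda>x. c * f x) = cnj c * ip g f"
  by (subst ip_cnj) (simp add: ip_scale_left ip_cnj[of g])

lemma orth_ip: "orthonormal U \<Longrightarrow> u \<in> U \<Longrightarrow> v \<in> U \<Longrightarrow> ip u v = (if u = v then 1 else 0)"
  unfolding orthonormal_def by auto

lemma ip_expand_u:
  assumes "finite U" "U \<subseteq> L2 \<Omega>" "orthonormal U" "w \<in> U"
  shows "ip (\<lambda>x. \<Sum>u\<in>U. c u * u x) w = c w"
proof -
  have "ip (\<lambda>x. \<Sum>u\<in>U. c u * u x) w = (\<Sum>u\<in>U. c u * ip u w)"
    using assms by (intro ip_sum_left[where \<Omega>=\<Omega>]) auto
  also have "\<dots> = (\<Sum>u\<in>U. if u = w then c u else 0)"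
    using assms by (intro sum.cong) (auto simp: orth_ip)
  also have "\<dots> = c w" using assms by simp
  finally show ?thesis .
qed

lemma parseval:
  assumes "finite U" "U \<subseteq> L2 \<Omega>" "orthonormal U"
  shows "nrm2 (\<lambda>x. \<Sum>u\<in>U. c u * u x) = (\<Sum>u\<in>U. (cmod (c u))^2)"
proof -
  let ?s = "\<lambda>x. \<Sum>u\<in>U. c u * u x"
  have sL: "?s \<in> L2 \<Omega>" using assms by (intro L2_sum) auto
  have "complex_of_real (nrm2 ?s) = ip ?s ?s" by (simp add: ip_self)
  also have "\<dots> = (\<Sum>u\<in>U. c u * ip u ?s)"
    using assms sL by (intro ip_sum_left[where \<Omega>=\<Omega>]) auto
  also have "\<dots> = (\<Sum>u\<in>U. c u * cnj (c u))"
  proof (intro sum.cong refl)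
    fix u assume u: "u \<in> U"
    have "ip u ?s = cnj (ip ?s u)" by (rule ip_cnj)
    also have "\<dots> = cnj (c u)" using ip_expand_u[OF assms u] by simp
    finally show "c u * ip u ?s = c u * cnj (c u)" by simp
  qed
  also have "\<dots> = complex_of_real (\<Sum>u\<in>U. (cmod (c u))^2)"
    by (simp only: of_real_sum complex_norm_square)
  finally show ?thesis using of_real_eq_iff by blast
qed

lemma bessel:
  assumes "finite S" "S \<subseteq> L2 \<Omega>" "orthonormal S" "h \<in> L2 \<Omega>"
  shows "(\<Sum>e\<in>S. (cmod (ip h e))^2) \<le> nrm2 h"
proof -
  let ?s = "\<lambda>x. \<Sum>e\<in>S. ip h e * e x"
  let ?d = "\<lambda>x. h x - ?s x"
  have sL: "?s \<in> L2 \<Omega>" using assms by (intro L2_sum) auto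
  have dL: "?d \<in> L2 \<Omega>" using sL assms by (intro L2_diff) auto
  have d0: "ip ?d e = 0" if e: "e \<in> S" for e
    using ip_diff_left[OF assms(4) sL, of e] ip_expand_u[OF assms(1-3) e, of "\<lambda>e. ip h e"] e assms
    by auto
  have "complex_of_real (nrm2 ?d) = ip ?d ?d" by (simp add: ip_self)
  also have "\<dots> = ip ?d h - ip ?d ?s"
  proof -
    have "ip ?d ?d = cnj (ip (\<lambda>x. h x - ?s x) ?d)" by (rule ip_cnj)
    also have "\<dots> = cnj (ip h ?d - ip ?s ?d)" using ip_diff_left[OF assms(4) sL dL] by simp
    also have "\<dots> = ip ?d h - ip ?d ?s" by (simp add: ip_cnj[of ?d])
    finally show ?thesis .
  qed
  also have "ip ?d ?s = 0"
    using ip_sum_right[OF assms(1) _ dL, of "\<lambda>e. e" "\<lambda>e. ip h e"] assms d0 by auto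
  also have "ip ?d h = ip h h - ip ?s h" using ip_diff_left[OF assms(4) sL assms(4)] by simp
  also have "ip ?s h = (\<Sum>e\<in>S. ip h e * ip e h)"
    using ip_sum_left[OF assms(1) _ assms(4), of "\<lambda>e. e" "\<lambda>e. ip h e"] assms by auto
  also have "\<dots> = complex_of_real (\<Sum>e\<in>S. (cmod (ip h e))^2)"
    by (simp only: ip_cnj[of _ h] of_real_sum complex_norm_square)
  finally have "complex_of_real (nrm2 ?d) = complex_of_real (nrm2 h - (\<Sum>e\<in>S. (cmod (ip h e))^2))"
    by (simp add: ip_self)
  then have "nrm2 ?d = nrm2 h - (\<Sum>e\<in>S. (cmod (ip h e))^2)" using of_real_eq_iff by blast
  with nrm2_nonneg[of ?d] show ?thesis by simp
qed


lemma gram_schmidt: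
  assumes "finite F" "F \<subseteq> L2 \<Omega>"
  shows "\<exists>U. finite U \<and> U \<subseteq> L2 \<Omega> \<and> orthonormal U \<and>
           (\<forall>f\<in>F. AE x in lborel. f x = (\<Sum>u\<in>U. ip f u * u x))"
  using assms
proof (induction F rule: finite_induct)
  case empty
  show ?case by (intro exI[of _ "{}"]) (auto simp: orthonormal_def)
next
  case (insert f F)
  then obtain U where U: "finite U" "U \<subseteq> L2 \<Omega>" "orthonormal U"
      and rep: "\<forall>g\<in>F. AE x in lborel. g x = (\<Sum>u\<in>U. ip g u * u x)" by auto
  have fL: "f \<in> L2 \<Omega>" using insert by auto
  let ?s = "\<lambda>x. \<Sum>u\<in>U. ip f u * u x"
  let ?h = "\<lambda>x. f x - ?s x"
  have sL: "?s \<in> L2 \<Omega>" using U by (intro L2_sum) auto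
  have hL: "?h \<in> L2 \<Omega>" using sL fL by (intro L2_diff)
  have h0: "ip ?h w = 0" if w: "w \<in> U" for w
    using ip_diff_left[OF fL sL, of w] ip_expand_u[OF U w, of "\<lambda>u. ip f u"] w U by auto
  show ?case
  proof (cases "nrm2 ?h = 0")
    case True
    have "AE x in lborel. ?h x = 0" by (rule nrm2_zero_AE[OF hL True])
    then have "AE x in lborel. f x = ?s x" by auto
    then show ?thesis using U rep by (intro exI[of _ U]) auto
  next
    case False
    define n where "n = sqrt (nrm2 ?h)"
    have npos: "n > 0" using False nrm2_nonneg[of ?h] by (simp add: n_def)
    have n2: "n^2 = nrm2 ?h" using nrm2_nonneg[of ?h] by (simp add: n_def)
    define u0 where "u0 = (\<lambda>x. complex_of_real (1/n) * ?h x)"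
    have u0L: "u0 \<in> L2 \<Omega>" unfolding u0_def using hL by (rule L2_scale)
    have u00: "ip u0 u0 = 1"
    proof -
      have "ip u0 u0 = complex_of_real (1/n) * (cnj (complex_of_real (1/n)) * ip ?h ?h)"
        unfolding u0_def by (simp only: ip_scale_left ip_scale_right)
      also have "\<dots> = complex_of_real ((1/n)^2 * nrm2 ?h)"
        by (simp only: ip_self complex_cnj_complex_of_real of_real_mult power2_eq_square mult.assoc)
      also have "(1/n)^2 * nrm2 ?h = 1" unfolding n2[symmetric] using npos by (simp add: field_simps)
      finally show ?thesis by simp
    qed
    have u0w: "ip u0 w = 0" if "w \<in> U" for w
      unfolding u0_def by (simp only: ip_scale_left h0[OF that] mult_zero_right)
    have wu0: "ip w u0 = 0" if "w \<in> U" for w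
      using u0w[OF that] by (simp add: ip_cnj[of w])
    have u0n: "u0 \<notin> U"
    proof
      assume "u0 \<in> U" then have "ip u0 u0 = 0" using u0w by blast
      with u00 show False by simp
    qed
    let ?U = "insert u0 U"
    have onU: "orthonormal ?U"
      using U(3) u00 u0w wu0 unfolding orthonormal_def by auto
    have repF: "AE x in lborel. g x = (\<Sum>u\<in>?U. ip g u * u x)" if g: "g \<in> F" for g
    proof -
      have gL: "g \<in> L2 \<Omega>" using insert g by auto
      have ae: "AE x in lborel. g x = (\<Sum>u\<in>U. ip g u * u x)" using rep g by auto
      have "ip g u0 = ip (\<lambda>x. \<Sum>u\<in>U. ip g u * u x) u0"
        using gL U u0L ae by (intro ip_AE_left L2_meas[where \<Omega>=\<Omega>] L2_sum) auto
      also have "\<dots> = (\<Sum>u\<in>U. ip g u * ip u u0)"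
        using U u0L by (intro ip_sum_left[where \<Omega>=\<Omega>]) auto
      also have "\<dots> = 0" using wu0 by simp
      finally have "ip g u0 = 0" .
      then show ?thesis using ae U u0n by simp
    qed
    have repf: "AE x in lborel. f x = (\<Sum>u\<in>?U. ip f u * u x)"
    proof -
      have "ip f u0 = ip (\<lambda>x. ?h x + ?s x) u0" by simp
      also have "\<dots> = ip ?h u0 + ip ?s u0" using hL sL u0L by (rule ip_add_left)
      also have "ip ?s u0 = 0"
        using ip_sum_left[OF U(1) _ u0L, of "\<lambda>u. u" "\<lambda>u. ip f u"] U wu0 by auto
      also have "ip ?h u0 = complex_of_real n"
      proof -
        have "ip ?h u0 = cnj (ip u0 ?h)" by (rule ip_cnj)
        also have "\<dots> = cnj (complex_of_real (1/n) * ip ?h ?h)" unfolding u0_def by (simp only: ip_scale_left)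
        also have "\<dots> = complex_of_real ((1/n) * n^2)" by (simp only: ip_self n2 complex_cnj_mult complex_cnj_complex_of_real of_real_mult)
        also have "\<dots> = complex_of_real n" using npos by (simp add: power2_eq_square)
        finally show ?thesis .
      qed
      finally have c: "ip f u0 = complex_of_real n" by simp
      have "\<And>x. (\<Sum>u\<in>?U. ip f u * u x) = complex_of_real n * (complex_of_real (1/n) * ?h x) + ?s x"
        using U u0n c by (simp add: u0_def)
      also have "\<And>x. complex_of_real n * (complex_of_real (1/n) * ?h x) + ?s x = f x"
        using npos by (simp add: field_simps)
      finally show ?thesis by simp
    qed
    show ?thesis using U u0L onU repF repf by (intro exI[of _ ?U]) auto
  qed
qed


definition lop :: "complex set \<Rightarrow> op \<Rightarrow> bool" where
  "lop \<Omega> T \<longleftrightarrow>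
     (\<forall>f\<in>L2 \<Omega>. T f \<in> L2 \<Omega>) \<and>
     (\<forall>f\<in>L2 \<Omega>. \<forall>g\<in>L2 \<Omega>. (AE x in lborel. f x = g x) \<longrightarrow> (AE x in lborel. T f x = T g x)) \<and>
     (\<forall>f\<in>L2 \<Omega>. \<forall>g\<in>L2 \<Omega>. \<forall>a b::complex.
         AE x in lborel. T (\<lambda>y. a * f y + b * g y) x = a * T f x + b * T g x)"

lemma lop_L2: "lop \<Omega> T \<Longrightarrow> f \<in> L2 \<Omega> \<Longrightarrow> T f \<in> L2 \<Omega>" by (simp add: lop_def)
lemma lop_AE: "lop \<Omega> T \<Longrightarrow> f \<in> L2 \<Omega> \<Longrightarrow> g \<in> L2 \<Omega> \<Longrightarrow> (AE x in lborel. f x = g x)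
   \<Longrightarrow> (AE x in lborel. T f x = T g x)" by (simp add: lop_def)
lemma lop_lin: "lop \<Omega> T \<Longrightarrow> f \<in> L2 \<Omega> \<Longrightarrow> g \<in> L2 \<Omega> \<Longrightarrow>
   AE x in lborel. T (\<lambda>y. a * f y + b * g y) x = a * T f x + b * T g x" by (simp add: lop_def)

lemma lop_sum:
  assumes "lop \<Omega> X" "finite U" "U \<subseteq> L2 \<Omega>"
  shows "AE x in lborel. X (\<lambda>y. \<Sum>u\<in>U. c u * u y) x = (\<Sum>u\<in>U. c u * X u x)"
  using assms(2,3)
proof (induction U rule: finite_induct)
  case empty
  have "AE x in lborel. X (\<lambda>y. 0 * (\<lambda>y. 0) y + 0 * (\<lambda>y. 0) y) x = 0 * X (\<lambda>y. 0) x + 0 * X (\<lambda>y. 0) x"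
    by (rule lop_lin[OF assms(1) L2_zero L2_zero])
  then show ?case by simp
next
  case (insert a U)
  have sL: "(\<lambda>y. \<Sum>u\<in>U. c u * u y) \<in> L2 \<Omega>" using insert by (intro L2_sum) auto
  have e: "(\<lambda>y. \<Sum>u\<in>insert a U. c u * u y) = (\<lambda>y. c a * a y + 1 * (\<Sum>u\<in>U. c u * u y))"
    using insert by simp
  have "AE x in lborel. X (\<lambda>y. c a * a y + 1 * (\<Sum>u\<in>U. c u * u y)) x
          = c a * X a x + 1 * X (\<lambda>y. \<Sum>u\<in>U. c u * u y) x"
    using lop_lin[OF assms(1), of a "\<lambda>y. \<Sum>u\<in>U. c u * u y" "c a" 1] insert sL by simp
  moreover have "AE x in lborel. X (\<lambda>y. \<Sum>u\<in>U. c u * u y) x = (\<Sum>u\<in>U. c u * X u x)"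
    using insert.IH insert.prems by auto
  ultimately show ?case unfolding e using insert(1,2) by (elim AE_mp) (auto intro!: AE_I2)
qed

lemma L2_meas': "f \<in> L2 \<Omega> \<Longrightarrow> f \<in> borel_measurable borel" by (simp add: L2_def)

lemma hs_proj_le:
  assumes O1: "\<Omega>1 \<in> sets borel" and sub: "\<Omega>1 \<subseteq> \<Omega>2" and X: "lop \<Omega>1 X"
    and S: "finite S" "S \<subseteq> L2 \<Omega>2" "orthonormal S"
  shows "\<exists>U. finite U \<and> U \<subseteq> L2 \<Omega>1 \<and> orthonormal U \<and>
     (\<Sum>e\<in>S. nrm2 (X (\<lambda>y. indicator \<Omega>1 y * e y))) \<le> (\<Sum>u\<in>U. nrm2 (X u))"
proof -
  define P where "P = (\<lambda>(e::complex\<Rightarrow>complex) y. (indicator \<Omega>1 y :: complex) * e y)"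
  have PL: "P e \<in> L2 \<Omega>1" if "e \<in> S" for e using L2_ind[OF O1] that S unfolding P_def by auto
  obtain U where U: "finite U" "U \<subseteq> L2 \<Omega>1" "orthonormal U"
    and repU: "\<forall>f\<in>P ` S. AE x in lborel. f x = (\<Sum>u\<in>U. ip f u * u x)"
    using gram_schmidt[of "P ` S" \<Omega>1] S PL by auto
  have U2: "U \<subseteq> L2 \<Omega>2" using U L2_mono[OF sub] by auto
  have XU: "X u \<in> L2 \<Omega>1" if "u \<in> U" for u using lop_L2[OF X] U that by blast
  obtain W where W: "finite W" "W \<subseteq> L2 \<Omega>1" "orthonormal W"
    and repW: "\<forall>f\<in>X ` U. AE x in lborel. f x = (\<Sum>w\<in>W. ip f w * w x)"
    using gram_schmidt[of "X ` U" \<Omega>1] U XU by auto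
  define \<beta> where "\<beta> = (\<lambda>u w. ip (X u) w)"
  define z where "z = (\<lambda>w x. \<Sum>u\<in>U. cnj (\<beta> u w) * u x)"
  have zL: "z w \<in> L2 \<Omega>2" for w unfolding z_def using L2_sum[OF U(1), of "\<lambda>u. u" \<Omega>2 "\<lambda>u. cnj (\<beta> u w)"] U2 by auto
  have ipPe: "ip (P e) u = ip e u" if "e \<in> S" "u \<in> U" for e u
  proof -
    have u0: "u x = 0" if "x \<notin> \<Omega>1" for x using U \<open>u \<in> U\<close> that by (auto simp: L2_def)
    have "P e x * cnj (u x) = e x * cnj (u x)" for x
    proof (cases "x \<in> \<Omega>1")
      case True then show ?thesis unfolding P_def by simp
    next
      case False then show ?thesis using u0[OF False] by simp
    qed
    then have "(\<lambda>x. P e x * cnj (u x)) = (\<lambda>x. e x * cnj (u x))" by (rule ext)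
    then show ?thesis by (simp only: ip_def)
  qed
  have key: "nrm2 (X (P e)) = (\<Sum>w\<in>W. (cmod (ip (z w) e))^2)" if e: "e \<in> S" for e
  proof -
    have eL: "e \<in> L2 \<Omega>2" using S e by auto
    have s1L: "(\<lambda>x. \<Sum>u\<in>U. ip e u * u x) \<in> L2 \<Omega>1" using L2_sum[OF U(1), of "\<lambda>u. u" \<Omega>1 "\<lambda>u. ip e u"] U by auto
    have a1: "AE x in lborel. P e x = (\<Sum>u\<in>U. ip e u * u x)"
      using repU e ipPe by auto
    have a2: "AE x in lborel. X (P e) x = X (\<lambda>x. \<Sum>u\<in>U. ip e u * u x) x"
      using lop_AE[OF X PL[OF e] s1L a1] .
    have a3: "AE x in lborel. X (\<lambda>x. \<Sum>u\<in>U. ip e u * u x) x = (\<Sum>u\<in>U. ip e u * X u x)"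
      by (rule lop_sum[OF X U(1,2)])
    have a4: "AE x in lborel. \<forall>u\<in>U. X u x = (\<Sum>w\<in>W. \<beta> u w * w x)"
      using repW U(1) unfolding \<beta>_def by (intro AE_finite_allI) auto
    have a5: "AE x in lborel. X (P e) x = (\<Sum>w\<in>W. (\<Sum>u\<in>U. ip e u * \<beta> u w) * w x)"
      using a2 a3 a4
    proof eventually_elim
      case (elim x)
      have "X (P e) x = (\<Sum>u\<in>U. ip e u * (\<Sum>w\<in>W. \<beta> u w * w x))" using elim by simp
      also have "\<dots> = (\<Sum>u\<in>U. \<Sum>w\<in>W. ip e u * \<beta> u w * w x)"
        by (simp add: sum_distrib_left mult.assoc)
      also have "\<dots> = (\<Sum>w\<in>W. \<Sum>u\<in>U. ip e u * \<beta> u w * w x)" by (rule sum.swap)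
      also have "\<dots> = (\<Sum>w\<in>W. (\<Sum>u\<in>U. ip e u * \<beta> u w) * w x)"
        by (simp add: sum_distrib_right)
      finally show ?case .
    qed
    have m1: "X (P e) \<in> borel_measurable lborel" using lop_L2[OF X PL[OF e]] by (rule L2_meas)
    have m2: "(\<lambda>x. \<Sum>w\<in>W. (\<Sum>u\<in>U. ip e u * \<beta> u w) * w x) \<in> borel_measurable lborel"
    proof (rule L2_meas)
      show "(\<lambda>x. \<Sum>w\<in>W. (\<Sum>u\<in>U. ip e u * \<beta> u w) * w x) \<in> L2 \<Omega>1"
        by (rule L2_sum[OF W(1)]) (use W(2) in blast)
    qed
    have "nrm2 (X (P e)) = nrm2 (\<lambda>x. \<Sum>w\<in>W. (\<Sum>u\<in>U. ip e u * \<beta> u w) * w x)"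
      using m1 m2 a5 by (rule nrm2_AE)
    also have "\<dots> = (\<Sum>w\<in>W. (cmod (\<Sum>u\<in>U. ip e u * \<beta> u w))^2)"
      by (rule parseval[OF W])
    also have "\<dots> = (\<Sum>w\<in>W. (cmod (ip (z w) e))^2)"
    proof (intro sum.cong refl)
      fix w
      have "ip e (z w) = (\<Sum>u\<in>U. cnj (cnj (\<beta> u w)) * ip e u)"
        unfolding z_def using ip_sum_right[OF U(1) _ eL, of "\<lambda>u. u" "\<lambda>u. cnj (\<beta> u w)"] U2 by auto
      then have zz: "ip e (z w) = (\<Sum>u\<in>U. ip e u * \<beta> u w)" by (simp add: mult.commute)
      show "(cmod (\<Sum>u\<in>U. ip e u * \<beta> u w))^2 = (cmod (ip (z w) e))^2"
        by (simp only: ip_cnj[of "z w" e] complex_mod_cnj zz)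
    qed
    finally show ?thesis .
  qed
  have "(\<Sum>e\<in>S. nrm2 (X (P e))) = (\<Sum>e\<in>S. \<Sum>w\<in>W. (cmod (ip (z w) e))^2)"
    using key by simp
  also have "\<dots> = (\<Sum>w\<in>W. \<Sum>e\<in>S. (cmod (ip (z w) e))^2)" by (rule sum.swap)
  also have "\<dots> \<le> (\<Sum>w\<in>W. nrm2 (z w))"
    by (intro sum_mono bessel[OF S zL])
  also have "\<dots> = (\<Sum>w\<in>W. \<Sum>u\<in>U. (cmod (\<beta> u w))^2)"
    unfolding z_def by (intro sum.cong refl) (simp add: parseval[OF U])
  also have "\<dots> = (\<Sum>u\<in>U. \<Sum>w\<in>W. (cmod (\<beta> u w))^2)" by (rule sum.swap)
  also have "\<dots> = (\<Sum>u\<in>U. nrm2 (X u))"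
  proof (intro sum.cong refl)
    fix u assume u: "u \<in> U"
    have "AE x in lborel. X u x = (\<Sum>w\<in>W. \<beta> u w * w x)" using repW u unfolding \<beta>_def by auto
    moreover have "(\<lambda>x. \<Sum>w\<in>W. \<beta> u w * w x) \<in> borel_measurable lborel"
    proof (rule L2_meas)
      show "(\<lambda>x. \<Sum>w\<in>W. \<beta> u w * w x) \<in> L2 \<Omega>1"
        by (rule L2_sum[OF W(1)]) (use W(2) in blast)
    qed
    ultimately have "nrm2 (X u) = nrm2 (\<lambda>x. \<Sum>w\<in>W. \<beta> u w * w x)"
      using L2_meas[OF XU[OF u]] by (intro nrm2_AE) auto
    also have "\<dots> = (\<Sum>w\<in>W. (cmod (\<beta> u w))^2)" by (rule parseval[OF W])
    finally show "(\<Sum>w\<in>W. (cmod (\<beta> u w))^2) = nrm2 (X u)" by simp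
  qed
  finally show ?thesis using U unfolding P_def by blast
qed


lemma cont_Max:
  assumes "finite I" "I \<noteq> {}" "\<And>i. i \<in> I \<Longrightarrow> continuous_on S (f i)"
  shows "continuous_on S (\<lambda>w. Max ((\<lambda>i. (f i w :: real)) ` I))"
  using assms
proof (induction I rule: finite_ne_induct)
  case (singleton x) then show ?case by simp
next
  case (insert x F)
  have "(\<lambda>w. Max ((\<lambda>i. f i w) ` insert x F)) = (\<lambda>w. max (f x w) (Max ((\<lambda>i. f i w) ` F)))"
    using insert by (simp add: Max_insert)
  then show ?case using insert by (auto intro!: continuous_on_max)
qed

lemma var_id:
  fixes x :: "'p \<Rightarrow> 'a::real_inner"
  assumes "finite B" "sum \<mu> B = 1"
  shows "(\<Sum>y\<in>B. \<Sum>z\<in>B. \<mu> y * \<mu> z * (norm (x y - x z))^2)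
       = 2 * (\<Sum>y\<in>B. \<mu> y * (norm (x y - c))^2) - 2 * (norm ((\<Sum>y\<in>B. \<mu> y *\<^sub>R x y) - c))^2"
proof -
  define X where "X y = x y - c" for y
  have n: "(norm (x y - x z))^2 = (norm (X y))^2 + (norm (X z))^2 - 2 * inner (X y) (X z)" for y z
  proof -
    have "x y - x z = X y - X z" by (simp add: X_def)
    then show ?thesis by (simp add: power2_norm_eq_inner inner_diff_left inner_diff_right inner_commute)
  qed
  have s1: "(\<Sum>y\<in>B. \<Sum>z\<in>B. \<mu> y * \<mu> z * (norm (X y))^2) = (\<Sum>y\<in>B. \<mu> y * (norm (X y))^2)"
    by (simp add: sum_distrib_left[symmetric] sum_distrib_right[symmetric] assms mult.commute mult.left_commute)
  have s2: "(\<Sum>y\<in>B. \<Sum>z\<in>B. \<mu> y * \<mu> z * (norm (X z))^2) = (\<Sum>y\<in>B. \<mu> y * (norm (X y))^2)"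
    by (subst sum.swap) (simp add: sum_distrib_left[symmetric] sum_distrib_right[symmetric] assms mult.commute mult.left_commute)
  have s3: "(\<Sum>y\<in>B. \<Sum>z\<in>B. \<mu> y * \<mu> z * inner (X y) (X z)) = (norm (\<Sum>y\<in>B. \<mu> y *\<^sub>R X y))^2"
  proof -
    have "(norm (\<Sum>y\<in>B. \<mu> y *\<^sub>R X y))^2 = (\<Sum>z\<in>B. \<Sum>y\<in>B. \<mu> y * \<mu> z * inner (X y) (X z))"
      by (simp add: power2_norm_eq_inner inner_sum_left inner_sum_right sum_distrib_left mult.assoc mult.left_commute)
    also have "\<dots> = (\<Sum>y\<in>B. \<Sum>z\<in>B. \<mu> y * \<mu> z * inner (X y) (X z))" by (rule sum.swap)
    finally show ?thesis by simp
  qed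
  have s4: "(\<Sum>y\<in>B. \<mu> y *\<^sub>R X y) = (\<Sum>y\<in>B. \<mu> y *\<^sub>R x y) - c"
    by (simp add: X_def scaleR_diff_right sum_subtractf assms flip: scaleR_sum_left)
  have "(\<Sum>y\<in>B. \<Sum>z\<in>B. \<mu> y * \<mu> z * (norm (x y - x z))^2)
       = (\<Sum>y\<in>B. \<Sum>z\<in>B. \<mu> y * \<mu> z * (norm (X y))^2 + \<mu> y * \<mu> z * (norm (X z))^2
              - 2 * (\<mu> y * \<mu> z * inner (X y) (X z)))"
    by (simp add: n algebra_simps)
  also have "\<dots> = (\<Sum>y\<in>B. \<Sum>z\<in>B. \<mu> y * \<mu> z * (norm (X y))^2) + (\<Sum>y\<in>B. \<Sum>z\<in>B. \<mu> y * \<mu> z * (norm (X z))^2)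
       - 2 * (\<Sum>y\<in>B. \<Sum>z\<in>B. \<mu> y * \<mu> z * inner (X y) (X z))"
    by (simp add: sum.distrib sum_subtractf sum_distrib_left)
  also have "\<dots> = 2 * (\<Sum>y\<in>B. \<mu> y * (norm (x y - c))^2) - 2 * (norm ((\<Sum>y\<in>B. \<mu> y *\<^sub>R x y) - c))^2"
    unfolding s1 s2 s3 s4 by (simp add: X_def)
  finally show ?thesis .
qed


lemma norm_add_scale_sq:
  fixes x y :: "'a::real_inner"
  shows "(norm (x + t *\<^sub>R y))^2 = (norm x)^2 + 2 * t * inner x y + t^2 * (norm y)^2"
  unfolding power2_norm_eq_inner by (simp add: inner_add_left inner_add_right inner_commute algebra_simps power2_eq_square)

lemma kirsz_core:
  fixes a b :: "'i \<Rightarrow> complex" and p :: complex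
  assumes fin: "finite I" and ne: "I \<noteq> {}"
    and lip: "\<forall>i\<in>I. \<forall>j\<in>I. norm (b i - b j) \<le> norm (a i - a j)"
  shows "\<exists>v. \<forall>i\<in>I. (norm (v - b i))^2 - (norm (p - a i))^2 \<le> 0"
proof (rule ccontr)
  assume nex: "\<not> ?thesis"
  define g where "g i w = (norm (w - b i))^2 - (norm (p - a i))^2" for i w
  define H where "H w = Max ((\<lambda>i. g i w) ` I)" for w
  define K where "K = convex hull (b ` I)"
  have Kc: "compact K" unfolding K_def using fin by (intro finite_imp_compact_convex_hull) auto
  have Kne: "K \<noteq> {}" unfolding K_def using ne by simp
  have Kcv: "convex K" unfolding K_def by simp
  have contH: "continuous_on K H" unfolding H_def g_def using fin ne
    by (intro cont_Max) (auto intro!: continuous_intros)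
  obtain v where vK: "v \<in> K" and vmin: "\<forall>w\<in>K. H v \<le> H w"
    using continuous_attains_inf[OF Kc Kne contH] by auto
  define m where "m = H v"
  have gle: "g i w \<le> H w" if "i \<in> I" for i w unfolding H_def using fin that by simp
  have mpos: "m > 0"
  proof (rule ccontr)
    assume "\<not> m > 0"
    then have "\<forall>i\<in>I. g i v \<le> 0" using gle unfolding m_def by (meson le_less_trans not_le)
    with nex show False unfolding g_def by blast
  qed
  define J where "J = {i\<in>I. g i v = m}"
  have Jsub: "J \<subseteq> I" unfolding J_def by auto
  have Jne: "J \<noteq> {}"
  proof -
    have "H v \<in> (\<lambda>i. g i v) ` I" unfolding H_def using fin ne by (intro Max_in) auto
    then show ?thesis unfolding J_def m_def by auto
  qed
  have ina: "g i v < m" if "i \<in> I" "i \<notin> J" for i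
    using gle[OF that(1), of v] that unfolding J_def m_def by auto
  let ?C = "convex hull (b ` J)"
  have Cc: "compact ?C" using fin Jsub by (intro finite_imp_compact_convex_hull) (auto intro: finite_subset)
  have CK: "?C \<subseteq> K" unfolding K_def using Jsub by (intro hull_mono) auto
  have vC: "v \<in> ?C"
  proof (rule ccontr)
    assume vnC: "v \<notin> ?C"
    define q where "q = closest_point ?C v"
    have Cne: "?C \<noteq> {}" using Jne by simp
    have qC: "q \<in> ?C" unfolding q_def using Cc Cne by (intro closest_point_in_set) (auto intro: compact_imp_closed)
    have qmin: "\<forall>z\<in>?C. dist v q \<le> dist v z"
      unfolding q_def using closest_point_exists(2)[OF compact_imp_closed[OF Cc] Cne] by auto
    define d where "d = q - v"
    have dnz: "d \<noteq> 0" using qC vnC unfolding d_def by auto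
    have dot: "inner (v - q) (b j - q) \<le> 0" if "j \<in> J" for j
      using any_closest_point_dot[OF convex_convex_hull compact_imp_closed[OF Cc] qC _ qmin] that
      by (auto intro: hull_inc)
    define w where "w t = v + t *\<^sub>R d" for t :: real
    have act: "g j (w t) \<le> m - t * (2 - t) * (norm d)^2" if "j \<in> J" "0 \<le> t" for j t
    proof -
      have "inner (v - b j) d = inner (q - b j) (q - v) - (norm d)^2"
        unfolding d_def by (simp add: power2_norm_eq_inner inner_diff_left inner_diff_right inner_commute)
      moreover have "inner (q - b j) (q - v) = inner (v - q) (b j - q)"
        by (simp add: inner_diff_left inner_diff_right inner_commute)
      ultimately have i1: "inner (v - b j) d + (norm d)^2 \<le> 0" using dot[OF that(1)] by simp
      have i2: "2 * t * (inner (v - b j) d + (norm d)^2) \<le> 0"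
        using i1 that(2) by (simp add: mult_nonneg_nonpos)
      have "g j (w t) = (norm (v - b j))^2 + 2 * t * inner (v - b j) d + t^2 * (norm d)^2 - (norm (p - a j))^2"
        unfolding g_def w_def using norm_add_scale_sq[of "v - b j" t d] by (simp add: algebra_simps)
      also have "\<dots> = g j v + 2 * t * inner (v - b j) d + t^2 * (norm d)^2" unfolding g_def by simp
      also have "g j v = m" using that unfolding J_def by simp
      finally show ?thesis using i2 by (simp add: algebra_simps power2_eq_square)
    qed
    have ev1: "\<forall>i\<in>I - J. eventually (\<lambda>t. g i (w t) < m) (at_right 0)"
    proof
      fix i assume i: "i \<in> I - J"
      have "isCont (\<lambda>t. g i (w t)) 0" unfolding g_def w_def by (intro continuous_intros)
      then have "((\<lambda>t. g i (w t)) \<longlongrightarrow> g i (w 0)) (at_right 0)"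
        using continuous_at_imp_continuous_at_within continuous_within by blast
      moreover have "g i (w 0) < m" using ina i unfolding w_def by auto
      ultimately show "eventually (\<lambda>t. g i (w t) < m) (at_right 0)" by (rule order_tendstoD(2))
    qed
    have ev2: "eventually (\<lambda>t. t < 1) (at_right (0::real))"
      by (rule order_tendstoD(2)[OF tendsto_ident_at]) simp
    have "eventually (\<lambda>t. 0 < t \<and> t < 1 \<and> (\<forall>i\<in>I - J. g i (w t) < m)) (at_right 0)"
      using eventually_at_right_less ev2 eventually_ball_finite[OF finite_Diff[OF fin] ev1]
      by eventually_elim auto
    then obtain t where t: "0 < t" "t < 1" "\<forall>i\<in>I - J. g i (w t) < m"
      using eventually_happens'[OF trivial_limit_at_right_real] by blast
    have allm: "g i (w t) < m" if "i \<in> I" for i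
    proof (cases "i \<in> J")
      case True
      have "0 < t * (2 - t) * (norm d)^2" using t dnz by simp
      moreover have "g i (w t) \<le> m - t * (2 - t) * (norm d)^2" using act[OF True] t by simp
      ultimately show ?thesis by linarith
    next
      case False then show ?thesis using t that by auto
    qed
    have "w t = (1 - t) *\<^sub>R v + t *\<^sub>R q" unfolding w_def d_def by (simp add: algebra_simps)
    then have wK: "w t \<in> K" using Kcv vK CK qC t by (auto intro!: convexD)
    have "H (w t) < m" unfolding H_def using fin ne allm by simp
    with vmin wK show False unfolding m_def by fastforce
  qed
  define B where "B = b ` J"
  have Bf: "finite B" unfolding B_def using fin Jsub by (auto intro: finite_subset)
  obtain \<mu> where mu0: "\<forall>y\<in>B. 0 \<le> \<mu> y" and mu1: "sum \<mu> B = 1" and muv: "(\<Sum>y\<in>B. \<mu> y *\<^sub>R y) = v"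
    using vC unfolding B_def[symmetric] convex_hull_finite[OF Bf] by auto
  define jj where "jj y = inv_into J b y" for y
  have jjJ: "jj y \<in> J" and bjj: "b (jj y) = y" if "y \<in> B" for y
    using that unfolding jj_def B_def by (auto intro: inv_into_into f_inv_into_f)
  define a' where "a' y = a (jj y)" for y
  have lipB: "(norm (y - z))^2 \<le> (norm (a' y - a' z))^2" if "y \<in> B" "z \<in> B" for y z
  proof -
    have "norm (b (jj y) - b (jj z)) \<le> norm (a (jj y) - a (jj z))"
      using lip jjJ[OF that(1)] jjJ[OF that(2)] Jsub by blast
    then show ?thesis using bjj that unfolding a'_def by (simp add: power_mono)
  qed
  have actB: "(norm (y - v))^2 = (norm (a' y - p))^2 + m" if "y \<in> B" for y
  proof -
    have "g (jj y) v = m" using jjJ[OF that] unfolding J_def by simp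
    then show ?thesis unfolding g_def a'_def using bjj[OF that] by (simp add: norm_minus_commute)
  qed
  have e1: "(\<Sum>y\<in>B. \<Sum>z\<in>B. \<mu> y * \<mu> z * (norm (y - z))^2) = 2 * (\<Sum>y\<in>B. \<mu> y * (norm (y - v))^2)"
    using var_id[OF Bf mu1, of "\<lambda>y. y" v] muv by simp
  have e2: "(\<Sum>y\<in>B. \<Sum>z\<in>B. \<mu> y * \<mu> z * (norm (a' y - a' z))^2) \<le> 2 * (\<Sum>y\<in>B. \<mu> y * (norm (a' y - p))^2)"
    using var_id[OF Bf mu1, of a' p] by simp
  have e3: "(\<Sum>y\<in>B. \<Sum>z\<in>B. \<mu> y * \<mu> z * (norm (y - z))^2) \<le> (\<Sum>y\<in>B. \<Sum>z\<in>B. \<mu> y * \<mu> z * (norm (a' y - a' z))^2)"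
    using lipB mu0 by (intro sum_mono mult_left_mono) auto
  have e4: "(\<Sum>y\<in>B. \<mu> y * (norm (y - v))^2) = (\<Sum>y\<in>B. \<mu> y * (norm (a' y - p))^2) + m"
  proof -
    have "(\<Sum>y\<in>B. \<mu> y * (norm (y - v))^2) = (\<Sum>y\<in>B. \<mu> y * (norm (a' y - p))^2 + \<mu> y * m)"
      using actB by (intro sum.cong) (auto simp: distrib_left)
    also have "\<dots> = (\<Sum>y\<in>B. \<mu> y * (norm (a' y - p))^2) + m"
      by (simp add: sum.distrib mu1 flip: sum_distrib_right)
    finally show ?thesis .
  qed
  show False using e1 e2 e3 e4 mpos by linarith
qed


lemma kirsz_point:
  fixes f :: "complex \<Rightarrow> complex"
  assumes lip: "\<forall>x\<in>A. \<forall>y\<in>A. norm (f x - f y) \<le> norm (x - y)"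
  shows "\<exists>v. \<forall>x\<in>A. norm (v - f x) \<le> norm (p - x)"
proof (cases "A = {}")
  case True then show ?thesis by simp
next
  case False
  then obtain x0 where x0: "x0 \<in> A" by auto
  define S where "S = cball (f x0) (norm (p - x0))"
  define F where "F = (\<lambda>x. cball (f x) (norm (p - x))) ` A"
  have "S \<inter> \<Inter>F \<noteq> {}"
  proof (rule compact_imp_fip)
    show "compact S" unfolding S_def by simp
    show "closed T" if "T \<in> F" for T using that unfolding F_def by auto
    show "S \<inter> \<Inter>F' \<noteq> {}" if fF: "finite F'" and sF: "F' \<subseteq> F" for F'
    proof -
      obtain A' where A': "A' \<subseteq> A" "finite A'" "F' = (\<lambda>x. cball (f x) (norm (p - x))) ` A'"
        using finite_subset_image[OF fF] sF unfolding F_def by blast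
      have "\<exists>v. \<forall>i\<in>insert x0 A'. (norm (v - f i))^2 - (norm (p - i))^2 \<le> 0"
        using A' x0 lip by (intro kirsz_core) auto
      then obtain v where v: "\<forall>i\<in>insert x0 A'. (norm (v - f i))^2 - (norm (p - i))^2 \<le> 0" by blast
      have vi: "norm (v - f i) \<le> norm (p - i)" if "i \<in> insert x0 A'" for i
      proof -
        have "(norm (v - f i))^2 \<le> (norm (p - i))^2" using v that by auto
        then show ?thesis using power2_le_imp_le by auto
      qed
      have dd: "dist c v = norm (v - c)" for c by (metis dist_commute dist_norm)
      have "v \<in> S \<inter> \<Inter>F'" unfolding S_def A'(3) mem_cball using vi by (auto simp: dd)
      then show ?thesis by blast
    qed
  qed
  then obtain v where "v \<in> \<Inter>F" by blast
  moreover have dd: "dist c v = norm (v - c)" for c by (metis dist_commute dist_norm)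
  ultimately have "\<forall>x\<in>A. norm (v - f x) \<le> norm (p - x)" unfolding F_def by (auto simp: dd)
  then show ?thesis by blast
qed

lemma kirszbraun:
  fixes f :: "complex \<Rightarrow> complex"
  assumes lip: "\<forall>x\<in>A. \<forall>y\<in>A. norm (f x - f y) \<le> norm (x - y)"
  shows "\<exists>g. (\<forall>x\<in>A. g x = f x) \<and> (\<forall>x y. norm (g x - g y) \<le> norm (x - y))"
proof -
  define lipG where "lipG G \<longleftrightarrow> (\<forall>u\<in>G. \<forall>u'\<in>G. norm (snd u - snd u') \<le> norm (fst u - fst u'))"
    for G :: "(complex \<times> complex) set"
  define Gf where "Gf = (\<lambda>x. (x, f x)) ` A"
  define Z where "Z = {G. Gf \<subseteq> G \<and> lipG G}"
  have "\<exists>M\<in>Z. \<forall>X\<in>Z. M \<subseteq> X \<longrightarrow> X = M"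
  proof (rule Zorn_Lemma2, intro ballI)
    fix C assume C: "C \<in> chains Z"
    have CZ: "C \<subseteq> Z" and ch: "\<forall>X\<in>C. \<forall>Y\<in>C. X \<subseteq> Y \<or> Y \<subseteq> X"
      using C unfolding chains_def chain_subset_def by auto
    define U where "U = Gf \<union> \<Union>C"
    have "lipG U" unfolding lipG_def
    proof (intro ballI)
      fix u u' assume u: "u \<in> U" and u': "u' \<in> U"
      have "\<exists>G. (G = Gf \<or> G \<in> C) \<and> u \<in> G \<and> u' \<in> G"
      proof -
        obtain G1 where G1: "G1 = Gf \<or> G1 \<in> C" "u \<in> G1" using u unfolding U_def by auto
        obtain G2 where G2: "G2 = Gf \<or> G2 \<in> C" "u' \<in> G2" using u' unfolding U_def by auto
        have sub: "Gf \<subseteq> G" if "G \<in> C" for G using CZ that unfolding Z_def by auto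
        have u1: "G1 = Gf \<or> G1 \<in> C" and u2: "u \<in> G1" using G1 by auto
        have v1: "G2 = Gf \<or> G2 \<in> C" and v2: "u' \<in> G2" using G2 by auto
        show ?thesis
        proof (cases "G1 \<in> C")
          case c1: True
          show ?thesis
          proof (cases "G2 \<in> C")
            case c2: True
            have "G1 \<subseteq> G2 \<or> G2 \<subseteq> G1" using ch c1 c2 by blast
            then show ?thesis
            proof
              assume "G1 \<subseteq> G2" then show ?thesis using c2 u2 v2 by (intro exI[of _ G2]) auto
            next
              assume "G2 \<subseteq> G1" then show ?thesis using c1 u2 v2 by (intro exI[of _ G1]) auto
            qed
          next
            case False
            then have "G2 = Gf" using v1 by simp
            then show ?thesis using c1 u2 v2 sub[OF c1] by (intro exI[of _ G1]) auto
          qed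
        next
          case False
          then have g1: "G1 = Gf" using u1 by simp
          show ?thesis
          proof (cases "G2 \<in> C")
            case c2: True
            then show ?thesis using g1 u2 v2 sub[OF c2] by (intro exI[of _ G2]) auto
          next
            case False
            then have "G2 = Gf" using v1 by simp
            then show ?thesis using g1 u2 v2 by (intro exI[of _ Gf]) auto
          qed
        qed
      qed
      then obtain G where G: "G = Gf \<or> G \<in> C" "u \<in> G" "u' \<in> G" by blast
      have lGf: "lipG Gf" unfolding lipG_def Gf_def using lip by auto
      have "lipG G" using G(1) proof
        assume "G \<in> C" then show "lipG G" using CZ unfolding Z_def by auto
      qed (use lGf in simp)
      then show "norm (snd u - snd u') \<le> norm (fst u - fst u')" using G(2,3) unfolding lipG_def by blast
    qed
    moreover have "Gf \<subseteq> U" unfolding U_def by blast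
    ultimately have UZ: "U \<in> Z" unfolding Z_def by blast
    have "\<forall>X\<in>C. X \<subseteq> U" unfolding U_def by blast
    then show "\<exists>U\<in>Z. \<forall>X\<in>C. X \<subseteq> U" using UZ by blast
  qed
  then obtain M where MZ: "M \<in> Z" and Mmax: "\<forall>X\<in>Z. M \<subseteq> X \<longrightarrow> X = M" by blast
  have Mlip: "lipG M" and GfM: "Gf \<subseteq> M" using MZ unfolding Z_def by auto
  have uniq: "y = y'" if "(x, y) \<in> M" "(x, y') \<in> M" for x y y'
  proof -
    have "norm (snd (x, y) - snd (x, y')) \<le> norm (fst (x, y) - fst (x, y'))"
      using Mlip that unfolding lipG_def by blast
    then show ?thesis by simp
  qed
  have tot: "\<exists>y. (x, y) \<in> M" for x
  proof (rule ccontr)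
    assume nx: "\<not> (\<exists>y. (x, y) \<in> M)"
    define D where "D = fst ` M"
    define h where "h z = (SOME y. (z, y) \<in> M)" for z
    have hM: "(z, h z) \<in> M" if "z \<in> D" for z using that unfolding D_def h_def by (auto intro: someI)
    have "\<forall>z\<in>D. \<forall>z'\<in>D. norm (h z - h z') \<le> norm (z - z')"
    proof (intro ballI)
      fix z z' assume "z \<in> D" "z' \<in> D"
      then have "norm (snd (z, h z) - snd (z', h z')) \<le> norm (fst (z, h z) - fst (z', h z'))"
        using hM Mlip unfolding lipG_def by blast
      then show "norm (h z - h z') \<le> norm (z - z')" by simp
    qed
    then obtain v where v: "\<forall>z\<in>D. norm (v - h z) \<le> norm (x - z)" using kirsz_point by blast
    define M' where "M' = insert (x, v) M"
    have "lipG M'" unfolding lipG_def M'_def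
    proof (intro ballI)
      fix u u' assume u: "u \<in> insert (x, v) M" and u': "u' \<in> insert (x, v) M"
      have c: "norm (v - snd w) \<le> norm (x - fst w)" if "w \<in> M" for w
      proof -
        have "fst w \<in> D" using that unfolding D_def by auto
        moreover have "snd w = h (fst w)" using uniq hM[OF \<open>fst w \<in> D\<close>] that by (metis prod.collapse)
        ultimately show ?thesis using v by auto
      qed
      show "norm (snd u - snd u') \<le> norm (fst u - fst u')"
      proof (cases "u = (x, v)")
        case T1: True
        show ?thesis
        proof (cases "u' = (x, v)")
          case True then show ?thesis using T1 by simp
        next
          case False then have "u' \<in> M" using u' by simp
          then show ?thesis using c T1 by simp
        qed
      next
        case F1: False then have uM: "u \<in> M" using u by simp
        show ?thesis
        proof (cases "u' = (x, v)")
          case True then show ?thesis using c[OF uM] by (simp add: norm_minus_commute)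
        next
          case False then have "u' \<in> M" using u' by simp
          then show ?thesis using uM Mlip unfolding lipG_def by blast
        qed
      qed
    qed
    then have "M' \<in> Z" using GfM unfolding Z_def M'_def by auto
    moreover have "M \<subseteq> M'" unfolding M'_def by auto
    ultimately have "M' = M" using Mmax by blast
    then show False using nx unfolding M'_def by auto
  qed
  define g where "g x = (SOME y. (x, y) \<in> M)" for x
  have gM: "(x, g x) \<in> M" for x unfolding g_def using tot by (rule someI_ex)
  have "\<forall>x\<in>A. g x = f x"
  proof
    fix x assume "x \<in> A"
    then have "(x, f x) \<in> M" using GfM unfolding Gf_def by auto
    then show "g x = f x" using uniq gM by blast
  qed
  moreover have "\<forall>x y. norm (g x - g y) \<le> norm (x - y)"
  proof (intro allI)
    fix x y
    have "norm (snd (x, g x) - snd (y, g y)) \<le> norm (fst (x, g x) - fst (y, g y))"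
      using gM Mlip unfolding lipG_def by blast
    then show "norm (g x - g y) \<le> norm (x - y)" by simp
  qed
  ultimately show ?thesis by blast
qed

lemma kirszbraun_bounded:
  fixes f :: "complex \<Rightarrow> complex"
  assumes lip: "\<forall>x\<in>A. \<forall>y\<in>A. norm (f x - f y) \<le> norm (x - y)"
    and bd: "\<forall>x\<in>A. norm (f x) \<le> R" and R: "R \<ge> 0"
  shows "\<exists>g. (\<forall>x\<in>A. g x = f x) \<and> (\<forall>x y. norm (g x - g y) \<le> norm (x - y)) \<and> (\<forall>x. norm (g x) \<le> R)"
proof -
  obtain g where g: "\<forall>x\<in>A. g x = f x" "\<forall>x y. norm (g x - g y) \<le> norm (x - y)"
    using kirszbraun[OF lip] by blast
  define S where "S = cball (0::complex) R"
  have S: "convex S" "closed S" "S \<noteq> {}" unfolding S_def using R by auto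
  define g' where "g' x = closest_point S (g x)" for x
  have "\<forall>x\<in>A. g' x = f x"
    using g(1) bd unfolding g'_def S_def by (auto intro: closest_point_self)
  moreover have "\<forall>x y. norm (g' x - g' y) \<le> norm (x - y)"
    using closest_point_lipschitz[OF S] g(2) unfolding g'_def dist_norm by (meson order_trans)
  moreover have "\<forall>x. norm (g' x) \<le> R"
    using closest_point_in_set[OF S(2,3)] unfolding g'_def S_def by auto
  ultimately show ?thesis by blast
qed


lemma lip_regularize:
  fixes f :: "complex \<Rightarrow> complex"
  assumes Om: "\<Omega> \<in> sets borel" and fm: "f \<in> borel_measurable borel"
    and ae: "AE p in (lborel \<Otimes>\<^sub>M lborel). fst p \<in> \<Omega> \<and> snd p \<in> \<Omega> \<longrightarrow>
         cmod (f (fst p) - f (snd p)) \<le> cmod (fst p - snd p)"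
  shows "\<exists>A\<subseteq>\<Omega>. (AE x in lborel. x \<in> \<Omega> \<longrightarrow> x \<in> A) \<and> (\<forall>x\<in>A. \<forall>y\<in>A. cmod (f x - f y) \<le> cmod (x - y))"
proof -
  define Q where "Q x y \<longleftrightarrow> (x \<in> \<Omega> \<and> y \<in> \<Omega> \<longrightarrow> cmod (f x - f y) \<le> cmod (x - y))" for x y
  have Qm: "{p \<in> space (lborel \<Otimes>\<^sub>M lborel). Q (fst p) (snd p)} \<in> sets (lborel \<Otimes>\<^sub>M lborel)"
    unfolding Q_def using Om fm by measurable
  have "AE x in lborel. AE y in lborel. Q x y"
    using ae lborel_pair.AE_pair_iff[OF Qm] unfolding Q_def by simp
  then have aeG: "AE x in lborel. x \<in> {x. AE y in lborel. Q x y}" by simp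
  obtain \<B> :: "complex set set" where Bc: "countable \<B>" and Bo: "\<And>C. C \<in> \<B> \<Longrightarrow> open C"
    and Bb: "\<And>S. open S \<Longrightarrow> \<exists>U. U \<subseteq> \<B> \<and> S = \<Union>U"
    using univ_second_countable by blast
  have aeB: "AE x in lborel. \<forall>C\<in>\<B>. emeasure lborel (\<Omega> \<inter> C) = 0 \<longrightarrow> x \<notin> \<Omega> \<inter> C"
  proof (rule AE_ball_countable[THEN iffD2, OF Bc], intro ballI)
    fix C assume C: "C \<in> \<B>"
    show "AE x in lborel. emeasure lborel (\<Omega> \<inter> C) = 0 \<longrightarrow> x \<notin> \<Omega> \<inter> C"
    proof (cases "emeasure lborel (\<Omega> \<inter> C) = 0")
      case True
      have "\<Omega> \<inter> C \<in> null_sets lborel" using True Om Bo[OF C] by (auto simp: null_sets_def)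
      then show ?thesis by (rule AE_mp[OF AE_not_in]) auto
    qed simp
  qed
  define A where "A = {x\<in>\<Omega>. (AE y in lborel. Q x y) \<and> (\<forall>C\<in>\<B>. emeasure lborel (\<Omega> \<inter> C) = 0 \<longrightarrow> x \<notin> C)}"
  have aeA: "AE x in lborel. x \<in> \<Omega> \<longrightarrow> x \<in> A"
    using aeG aeB by eventually_elim (auto simp: A_def)
  have lipA: "cmod (f x - f x') \<le> cmod (x - x')" if x: "x \<in> A" and x': "x' \<in> A" for x x'
  proof (rule field_le_epsilon)
    fix e :: real assume e: "0 < e"
    define r where "r = e / 2"
    have r: "r > 0" using e unfolding r_def by simp
    obtain U where U: "U \<subseteq> \<B>" "ball x r = \<Union>U" using Bb[of "ball x r"] by auto
    obtain C where C: "C \<in> \<B>" "x \<in> C" "C \<subseteq> ball x r" using U r by (metis UnionE Union_upper centre_in_ball subsetD)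
    have Cpos: "emeasure lborel (\<Omega> \<inter> C) \<noteq> 0" using x C unfolding A_def by auto
    have "AE y in lborel. Q x y \<and> Q x' y" using x x' unfolding A_def by auto
    then obtain N where N: "{y \<in> space lborel. \<not> (Q x y \<and> Q x' y)} \<subseteq> N" "N \<in> null_sets lborel"
      by (rule AE_E) (auto simp: null_sets_def)
    have "\<exists>y\<in>\<Omega> \<inter> C. Q x y \<and> Q x' y"
    proof (rule ccontr)
      assume "\<not> ?thesis"
      then have "\<Omega> \<inter> C \<subseteq> N" using N(1) by auto
      then have "emeasure lborel (\<Omega> \<inter> C) \<le> emeasure lborel N" using N(2) by (intro emeasure_mono) auto
      then show False using Cpos N(2) by auto
    qed
    then obtain y where y: "y \<in> \<Omega>" "y \<in> C" "Q x y" "Q x' y" by auto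
    have xO: "x \<in> \<Omega>" and x'O: "x' \<in> \<Omega>" using x x' unfolding A_def by auto
    have d1: "cmod (f x - f y) \<le> cmod (x - y)" using y xO unfolding Q_def by auto
    have d2: "cmod (f x' - f y) \<le> cmod (x' - y)" using y x'O unfolding Q_def by auto
    have xy: "cmod (x - y) < r" using y C by (auto simp: dist_norm)
    have "cmod (x' - y) \<le> cmod (x' - x) + cmod (x - y)" using norm_triangle_ineq[of "x' - x" "x - y"] by simp
    moreover have "cmod (f x - f x') \<le> cmod (f x - f y) + cmod (f x' - f y)"
      using norm_triangle_ineq4[of "f x - f y" "f x' - f y"] by simp
    moreover have "cmod (x' - x) = cmod (x - x')" by (rule norm_minus_commute)
    ultimately show "cmod (f x - f x') \<le> cmod (x - x') + e" using d1 d2 xy unfolding r_def by linarith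
  qed
  show ?thesis using aeA lipA by (intro exI[of _ A]) (auto simp: A_def)
qed


lemma Linf_bound: "Linf \<Omega> f \<Longrightarrow> \<exists>B\<ge>0. AE x in lborel. x \<in> \<Omega> \<longrightarrow> cmod (f x) \<le> B"
proof -
  assume "Linf \<Omega> f"
  then obtain B where "AE x in lborel. x \<in> \<Omega> \<longrightarrow> cmod (f x) \<le> B" unfolding Linf_def by auto
  then have "AE x in lborel. x \<in> \<Omega> \<longrightarrow> cmod (f x) \<le> max B 0" by eventually_elim auto
  then show ?thesis by (intro exI[of _ "max B 0"]) auto
qed

lemma Linf_meas: "Linf \<Omega> f \<Longrightarrow> f \<in> borel_measurable borel" by (simp add: Linf_def)

lemma Lip1_mono: assumes "\<Omega>1 \<subseteq> \<Omega>2" "Lip1 \<Omega>2 g" shows "Lip1 \<Omega>1 g"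
proof -
  from assms(2) obtain B where m: "g \<in> borel_measurable borel" and
    b: "AE x in lborel. x \<in> \<Omega>2 \<longrightarrow> cmod (g x) \<le> B" and
    l: "AE p in (lborel \<Otimes>\<^sub>M lborel). fst p \<in> \<Omega>2 \<and> snd p \<in> \<Omega>2 \<longrightarrow>
         cmod (g (fst p) - g (snd p)) \<le> cmod (fst p - snd p)"
    unfolding Lip1_def Linf_def by auto
  have "AE x in lborel. x \<in> \<Omega>1 \<longrightarrow> cmod (g x) \<le> B" using b by eventually_elim (use assms(1) in auto)
  moreover have "AE p in (lborel \<Otimes>\<^sub>M lborel). fst p \<in> \<Omega>1 \<and> snd p \<in> \<Omega>1 \<longrightarrow>
         cmod (g (fst p) - g (snd p)) \<le> cmod (fst p - snd p)" using l by eventually_elim (use assms(1) in auto)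
  ultimately show ?thesis using m unfolding Lip1_def Linf_def by auto
qed

lemma lip_extend:
  assumes O1: "\<Omega>1 \<in> sets borel" and f: "Lip1 \<Omega>1 f"
  shows "\<exists>g. Lip1 \<Omega>2 g \<and> (AE x in lborel. x \<in> \<Omega>1 \<longrightarrow> g x = f x)"
proof -
  have fm: "f \<in> borel_measurable borel" using f unfolding Lip1_def Linf_def by auto
  obtain B where B0: "B \<ge> 0" and Bb: "AE x in lborel. x \<in> \<Omega>1 \<longrightarrow> cmod (f x) \<le> B"
    using Linf_bound f unfolding Lip1_def by blast
  have ae: "AE p in (lborel \<Otimes>\<^sub>M lborel). fst p \<in> \<Omega>1 \<and> snd p \<in> \<Omega>1 \<longrightarrow>
         cmod (f (fst p) - f (snd p)) \<le> cmod (fst p - snd p)" using f unfolding Lip1_def by auto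
  obtain A where A: "A \<subseteq> \<Omega>1" "AE x in lborel. x \<in> \<Omega>1 \<longrightarrow> x \<in> A"
    "\<forall>x\<in>A. \<forall>y\<in>A. cmod (f x - f y) \<le> cmod (x - y)"
    using lip_regularize[OF O1 fm ae] by blast
  define A' where "A' = {x\<in>A. cmod (f x) \<le> B}"
  have lipA': "\<forall>x\<in>A'. \<forall>y\<in>A'. cmod (f x - f y) \<le> cmod (x - y)" using A(3) unfolding A'_def by auto
  have bA': "\<forall>x\<in>A'. cmod (f x) \<le> B" unfolding A'_def by auto
  obtain g where g: "\<forall>x\<in>A'. g x = f x" "\<forall>x y. cmod (g x - g y) \<le> cmod (x - y)" "\<forall>x. cmod (g x) \<le> B"
    using kirszbraun_bounded[OF lipA' bA' B0] by blast
  have "1-lipschitz_on UNIV g" unfolding lipschitz_on_def using g(2) by (auto simp: dist_norm)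
  then have gm: "g \<in> borel_measurable borel"
    by (intro borel_measurable_continuous_onI lipschitz_on_continuous_on)
  have "Lip1 \<Omega>2 g" unfolding Lip1_def Linf_def using gm g(2,3) by (auto intro!: AE_I2)
  moreover have "AE x in lborel. x \<in> \<Omega>1 \<longrightarrow> g x = f x"
    using A(2) Bb by eventually_elim (use g(1) in \<open>auto simp: A'_def\<close>)
  ultimately show ?thesis by blast
qed

lemma L2_mult_Linf:
  assumes f: "Linf \<Omega> f" and e: "e \<in> L2 \<Omega>"
  shows "(\<lambda>x. f x * e x) \<in> L2 \<Omega>"
proof -
  obtain B where B0: "B \<ge> 0" and Bb: "AE x in lborel. x \<in> \<Omega> \<longrightarrow> cmod (f x) \<le> B"
    using Linf_bound[OF f] by blast
  have fm: "f \<in> borel_measurable borel" using f by (rule Linf_meas)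
  have em: "e \<in> borel_measurable borel" using e by (simp add: L2_def)
  have "integrable lborel (\<lambda>x. (cmod (f x * e x))^2)"
  proof (rule Bochner_Integration.integrable_bound)
    show "integrable lborel (\<lambda>x. B^2 * (cmod (e x))^2)" using e by (auto simp: L2_def)
    show "(\<lambda>x. (cmod (f x * e x))^2) \<in> borel_measurable lborel" using fm em by measurable
    show "AE x in lborel. norm ((cmod (f x * e x))^2) \<le> norm (B^2 * (cmod (e x))^2)"
      using Bb
    proof eventually_elim
      case (elim x)
      show ?case
      proof (cases "x \<in> \<Omega>")
        case True
        then have "cmod (f x) \<le> B" using elim by auto
        then have "(cmod (f x))^2 \<le> B^2" by (simp add: power_mono)
        then have "(cmod (f x))^2 * (cmod (e x))^2 \<le> B^2 * (cmod (e x))^2" by (simp add: mult_right_mono)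
        then show ?thesis by (simp add: norm_mult power_mult_distrib)
      next
        case False then have "e x = 0" using e by (simp add: L2_def)
        then show ?thesis by simp
      qed
    qed
  qed
  then show ?thesis using e fm em by (auto simp: L2_def)
qed

lemma bop_lop: "bop \<Omega> T \<Longrightarrow> lop \<Omega> T" unfolding bop_def lop_def by blast


lemma lop_comm_gen:
  assumes T: "lop \<Omega> T" and f: "Linf \<Omega> f"
  shows "lop \<Omega> (\<lambda>e x. c1 * (f x * T e x) + c2 * T (\<lambda>y. f y * e y) x)"
proof -
  have fe: "(\<lambda>y. f y * e y) \<in> L2 \<Omega>" if "e \<in> L2 \<Omega>" for e using L2_mult_Linf[OF f that] .
  have TL: "T e \<in> L2 \<Omega>" if "e \<in> L2 \<Omega>" for e using lop_L2[OF T that] .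
  have p1: "(\<lambda>x. c1 * (f x * T e x) + c2 * T (\<lambda>y. f y * e y) x) \<in> L2 \<Omega>" if e: "e \<in> L2 \<Omega>" for e
    using L2_add[OF L2_scale[OF L2_mult_Linf[OF f TL[OF e]], of c1] L2_scale[OF TL[OF fe[OF e]], of c2]] .
  have p2: "AE x in lborel. c1 * (f x * T e x) + c2 * T (\<lambda>y. f y * e y) x
                        = c1 * (f x * T e' x) + c2 * T (\<lambda>y. f y * e' y) x"
    if e: "e \<in> L2 \<Omega>" and e': "e' \<in> L2 \<Omega>" and ae: "AE x in lborel. e x = e' x" for e e'
  proof -
    have a1: "AE x in lborel. T e x = T e' x" using lop_AE[OF T e e' ae] .
    have "AE x in lborel. f x * e x = f x * e' x" using ae by eventually_elim simp
    then have a2: "AE x in lborel. T (\<lambda>y. f y * e y) x = T (\<lambda>y. f y * e' y) x"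
      using lop_AE[OF T fe[OF e] fe[OF e']] by simp
    from a1 a2 show ?thesis by eventually_elim simp
  qed
  have p3: "AE x in lborel. c1 * (f x * T (\<lambda>y. a * e y + b * e' y) x) + c2 * T (\<lambda>y. f y * (a * e y + b * e' y)) x
     = a * (c1 * (f x * T e x) + c2 * T (\<lambda>y. f y * e y) x) + b * (c1 * (f x * T e' x) + c2 * T (\<lambda>y. f y * e' y) x)"
    if e: "e \<in> L2 \<Omega>" and e': "e' \<in> L2 \<Omega>" for e e' a b
  proof -
    have a1: "AE x in lborel. T (\<lambda>y. a * e y + b * e' y) x = a * T e x + b * T e' x"
      using lop_lin[OF T e e'] .
    have eq: "(\<lambda>y. f y * (a * e y + b * e' y)) = (\<lambda>y. a * (f y * e y) + b * (f y * e' y))"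
      by (simp add: algebra_simps)
    have a2: "AE x in lborel. T (\<lambda>y. f y * (a * e y + b * e' y)) x = a * T (\<lambda>y. f y * e y) x + b * T (\<lambda>y. f y * e' y) x"
      unfolding eq using lop_lin[OF T fe[OF e] fe[OF e'], of a b] by simp
    from a1 a2 show ?thesis by eventually_elim (simp add: algebra_simps)
  qed
  show ?thesis unfolding lop_def using p1 p2 p3 by blast
qed

lemma lop_commut_Mult:
  assumes T: "lop \<Omega> T" and f: "Linf \<Omega> f"
  shows "lop \<Omega> (commut (Mult f) T)"
proof -
  have "commut (Mult f) T = (\<lambda>e x. 1 * (f x * T e x) + (-1) * T (\<lambda>y. f y * e y) x)"
    unfolding commut_def Mult_def by (simp add: fun_eq_iff)
  then show ?thesis using lop_comm_gen[OF T f, of 1 "-1"] by simp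
qed

lemma Linf_ee: "Linf \<Omega> (ee w)"
proof -
  have "continuous_on UNIV (ee w)" unfolding ee_def by (intro continuous_intros)
  then have "ee w \<in> borel_measurable borel" by (rule borel_measurable_continuous_onI)
  moreover have "cmod (ee w x) \<le> 1" for x unfolding ee_def by (simp add: norm_exp_eq_Re)
  ultimately show ?thesis unfolding Linf_def by (auto intro!: exI[of _ 1])
qed

lemma lop_commut_UU:
  assumes T: "lop \<Omega> T"
  shows "lop \<Omega> (commut T (UU w))"
proof -
  have eq: "commut T (UU w) = (\<lambda>e x. (-1) * (ee w x * T e x) + 1 * T (\<lambda>y. ee w y * e y) x)"
    unfolding commut_def UU_def Mult_def by (simp add: fun_eq_iff)
  show ?thesis unfolding eq by (rule lop_comm_gen[OF T Linf_ee])
qed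


lemma l2norm_AE: "f \<in> borel_measurable lborel \<Longrightarrow> g \<in> borel_measurable lborel \<Longrightarrow>
   (AE x in lborel. f x = g x) \<Longrightarrow> l2norm f = l2norm g"
  unfolding l2norm_def by (subst integral_cong_AE[where g="\<lambda>x. (cmod (g x))^2"]) auto

lemma l2norm_mono_AE:
  assumes f: "f \<in> borel_measurable lborel" and g: "g \<in> L2 \<Omega>"
    and ae: "AE x in lborel. cmod (f x) \<le> cmod (g x)"
  shows "l2norm f \<le> l2norm g"
proof -
  have ig: "integrable lborel (\<lambda>x. (cmod (g x))^2)" using g by (simp add: L2_def)
  have if': "integrable lborel (\<lambda>x. (cmod (f x))^2)"
  proof (rule Bochner_Integration.integrable_bound[OF ig])
    show "(\<lambda>x. (cmod (f x))^2) \<in> borel_measurable lborel" using f by measurable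
    show "AE x in lborel. norm ((cmod (f x))^2) \<le> norm ((cmod (g x))^2)"
      using ae by eventually_elim (simp add: power_mono)
  qed
  have "integral\<^sup>L lborel (\<lambda>x. (cmod (f x))^2) \<le> integral\<^sup>L lborel (\<lambda>x. (cmod (g x))^2)"
    using if' ig ae by (intro integral_mono_AE) (auto elim!: AE_mp intro!: AE_I2 power_mono)
  then show ?thesis unfolding l2norm_def by simp
qed

lemma hs_cong:
  assumes "\<And>e. e \<in> L2 \<Omega> \<Longrightarrow> X e \<in> borel_measurable lborel"
    and "\<And>e. e \<in> L2 \<Omega> \<Longrightarrow> Y e \<in> borel_measurable lborel"
    and "\<And>e. e \<in> L2 \<Omega> \<Longrightarrow> AE x in lborel. X e x = Y e x"
  shows "hs_norm \<Omega> X = hs_norm \<Omega> Y"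
  unfolding hs_norm_def
proof (intro SUP_cong refl)
  fix S assume "S \<in> {S. finite S \<and> S \<subseteq> L2 \<Omega> \<and> orthonormal S}"
  then have "S \<subseteq> L2 \<Omega>" by auto
  then have "(\<Sum>e\<in>S. (l2norm (X e))^2) = (\<Sum>e\<in>S. (l2norm (Y e))^2)"
    using assms by (intro sum.cong refl) (auto intro!: arg_cong[where f="\<lambda>t. t^2"] l2norm_AE)
  then show "ennreal (sqrt (\<Sum>e\<in>S. (l2norm (X e))^2)) = ennreal (sqrt (\<Sum>e\<in>S. (l2norm (Y e))^2))" by simp
qed

lemma hs_mono:
  assumes sub: "\<Omega>1 \<subseteq> \<Omega>2" and le: "\<And>e. e \<in> L2 \<Omega>1 \<Longrightarrow> l2norm (X e) \<le> l2norm (Y e)"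
  shows "hs_norm \<Omega>1 X \<le> hs_norm \<Omega>2 Y"
  unfolding hs_norm_def
proof (rule SUP_mono)
  fix S assume S: "S \<in> {S. finite S \<and> S \<subseteq> L2 \<Omega>1 \<and> orthonormal S}"
  then have S2: "S \<in> {S. finite S \<and> S \<subseteq> L2 \<Omega>2 \<and> orthonormal S}" using L2_mono[OF sub] by auto
  have "(\<Sum>e\<in>S. (l2norm (X e))^2) \<le> (\<Sum>e\<in>S. (l2norm (Y e))^2)"
    using S le by (intro sum_mono power_mono) (auto simp: l2norm_nonneg)
  then have "ennreal (sqrt (\<Sum>e\<in>S. (l2norm (X e))^2)) \<le> ennreal (sqrt (\<Sum>e\<in>S. (l2norm (Y e))^2))"
    by (intro ennreal_leI) simp
  then show "\<exists>m\<in>{S. finite S \<and> S \<subseteq> L2 \<Omega>2 \<and> orthonormal S}.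
      ennreal (sqrt (\<Sum>e\<in>S. (l2norm (X e))^2)) \<le> ennreal (sqrt (\<Sum>e\<in>m. (l2norm (Y e))^2))"
    using S2 by blast
qed

lemma hs_proj:
  assumes O1: "\<Omega>1 \<in> sets borel" and sub: "\<Omega>1 \<subseteq> \<Omega>2" and X: "lop \<Omega>1 X"
  shows "hs_norm \<Omega>2 (\<lambda>e. X (\<lambda>y. indicator \<Omega>1 y * e y)) = hs_norm \<Omega>1 X"
proof (rule antisym)
  show "hs_norm \<Omega>2 (\<lambda>e. X (\<lambda>y. indicator \<Omega>1 y * e y)) \<le> hs_norm \<Omega>1 X"
    unfolding hs_norm_def[of \<Omega>2]
  proof (rule SUP_least)
    fix S assume S: "S \<in> {S. finite S \<and> S \<subseteq> L2 \<Omega>2 \<and> orthonormal S}"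
    then obtain U where U: "finite U" "U \<subseteq> L2 \<Omega>1" "orthonormal U"
      and le: "(\<Sum>e\<in>S. nrm2 (X (\<lambda>y. indicator \<Omega>1 y * e y))) \<le> (\<Sum>u\<in>U. nrm2 (X u))"
      using hs_proj_le[OF O1 sub X] by blast
    have "ennreal (sqrt (\<Sum>e\<in>S. (l2norm (X (\<lambda>y. indicator \<Omega>1 y * e y)))^2))
        \<le> ennreal (sqrt (\<Sum>u\<in>U. (l2norm (X u))^2))"
      using le by (intro ennreal_leI) (simp add: l2norm_sq)
    also have "\<dots> \<le> hs_norm \<Omega>1 X" unfolding hs_norm_def using U by (intro SUP_upper) auto
    finally show "ennreal (sqrt (\<Sum>e\<in>S. (l2norm (X (\<lambda>y. indicator \<Omega>1 y * e y)))^2)) \<le> hs_norm \<Omega>1 X" .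
  qed
next
  show "hs_norm \<Omega>1 X \<le> hs_norm \<Omega>2 (\<lambda>e. X (\<lambda>y. indicator \<Omega>1 y * e y))"
    using sub by (rule hs_mono) (simp add: ind_L2_id)
qed



lemma l2norm_ind_le: assumes "f \<in> L2 \<Omega>" "\<Omega>1 \<in> sets borel"
  shows "l2norm (\<lambda>y. indicator \<Omega>1 y * f y) \<le> l2norm f"
proof (rule l2norm_mono_AE[OF _ assms(1)])
  show "(\<lambda>y. indicator \<Omega>1 y * f y) \<in> borel_measurable lborel"
    using L2_meas[OF L2_ind[OF assms(2) assms(1)]] .
  show "AE x in lborel. cmod (indicator \<Omega>1 x * f x) \<le> cmod (f x)"
    by (intro AE_I2) (simp add: indicator_def norm_mult)
qed

lemma bop_bound: "bop \<Omega> T \<Longrightarrow> \<exists>K\<ge>0. \<forall>f\<in>L2 \<Omega>. l2norm (T f) \<le> K * l2norm f"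
proof -
  assume "bop \<Omega> T"
  then obtain K where K: "\<forall>f\<in>L2 \<Omega>. l2norm (T f) \<le> K * l2norm f" unfolding bop_def by auto
  have "\<forall>f\<in>L2 \<Omega>. l2norm (T f) \<le> max K 0 * l2norm f"
  proof
    fix f assume "f \<in> L2 \<Omega>"
    then have "l2norm (T f) \<le> K * l2norm f" using K by auto
    also have "\<dots> \<le> max K 0 * l2norm f" by (intro mult_right_mono) (auto simp: l2norm_nonneg)
    finally show "l2norm (T f) \<le> max K 0 * l2norm f" .
  qed
  then show ?thesis by (intro exI[of _ "max K 0"]) auto
qed

lemma ind_lin: "(\<lambda>y. (indicator A y :: complex) * (a * f y + b * g y)) =
   (\<lambda>y. a * (indicator A y * f y) + b * (indicator A y * g y))"
  by (simp add: fun_eq_iff algebra_simps)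

lemma bop_iop:
  assumes O1: "\<Omega>1 \<in> sets borel" and sub: "\<Omega>1 \<subseteq> \<Omega>2" and T: "bop \<Omega>1 T"
  shows "bop \<Omega>2 (iop \<Omega>2 \<Omega>1 T)"
proof -
  have iL: "(\<lambda>y. indicator \<Omega>1 y * f y) \<in> L2 \<Omega>1" if "f \<in> L2 \<Omega>2" for f using L2_ind[OF O1 that] .
  have Tl: "lop \<Omega>1 T" using T by (rule bop_lop)
  obtain K where K0: "K \<ge> 0" and K: "\<forall>f\<in>L2 \<Omega>1. l2norm (T f) \<le> K * l2norm f" using bop_bound[OF T] by blast
  have p1: "\<forall>f\<in>L2 \<Omega>2. iop \<Omega>2 \<Omega>1 T f \<in> L2 \<Omega>2"
    unfolding iop_def using lop_L2[OF Tl iL] L2_mono[OF sub] by blast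
  have p2: "\<forall>f\<in>L2 \<Omega>2. \<forall>g\<in>L2 \<Omega>2. (AE x in lborel. f x = g x) \<longrightarrow> (AE x in lborel. iop \<Omega>2 \<Omega>1 T f x = iop \<Omega>2 \<Omega>1 T g x)"
  proof (intro ballI impI)
    fix f g assume f: "f \<in> L2 \<Omega>2" and g: "g \<in> L2 \<Omega>2" and ae: "AE x in lborel. f x = g x"
    have "AE x in lborel. indicator \<Omega>1 x * f x = indicator \<Omega>1 x * g x" using ae by eventually_elim simp
    then show "AE x in lborel. iop \<Omega>2 \<Omega>1 T f x = iop \<Omega>2 \<Omega>1 T g x"
      unfolding iop_def using lop_AE[OF Tl iL[OF f] iL[OF g]] by simp
  qed
  have p3: "\<forall>f\<in>L2 \<Omega>2. \<forall>g\<in>L2 \<Omega>2. \<forall>a b::complex.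
         AE x in lborel. iop \<Omega>2 \<Omega>1 T (\<lambda>y. a * f y + b * g y) x = a * iop \<Omega>2 \<Omega>1 T f x + b * iop \<Omega>2 \<Omega>1 T g x"
    unfolding iop_def ind_lin using lop_lin[OF Tl iL iL] by blast
  have p4: "\<forall>f\<in>L2 \<Omega>2. l2norm (iop \<Omega>2 \<Omega>1 T f) \<le> K * l2norm f"
  proof
    fix f assume f: "f \<in> L2 \<Omega>2"
    have "l2norm (iop \<Omega>2 \<Omega>1 T f) \<le> K * l2norm (\<lambda>y. indicator \<Omega>1 y * f y)"
      unfolding iop_def using K iL[OF f] by blast
    also have "\<dots> \<le> K * l2norm f" using K0 l2norm_ind_le[OF f O1] by (intro mult_left_mono) auto
    finally show "l2norm (iop \<Omega>2 \<Omega>1 T f) \<le> K * l2norm f" .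
  qed
  show ?thesis unfolding bop_def using p1 p2 p3 p4 by blast
qed

lemma eop_simp: "f \<in> L2 \<Omega>1 \<Longrightarrow> eop \<Omega>1 \<Omega>2 S f = (\<lambda>x. indicator \<Omega>1 x * S f x)"
  unfolding eop_def by (simp add: ind_L2_id)

lemma bop_eop:
  assumes O1: "\<Omega>1 \<in> sets borel" and sub: "\<Omega>1 \<subseteq> \<Omega>2" and S: "bop \<Omega>2 S"
  shows "bop \<Omega>1 (eop \<Omega>1 \<Omega>2 S)"
proof -
  have L12: "f \<in> L2 \<Omega>2" if "f \<in> L2 \<Omega>1" for f using L2_mono[OF sub] that by blast
  have Sl: "lop \<Omega>2 S" using S by (rule bop_lop)
  obtain K where K0: "K \<ge> 0" and K: "\<forall>f\<in>L2 \<Omega>2. l2norm (S f) \<le> K * l2norm f" using bop_bound[OF S] by blast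
  have p1: "\<forall>f\<in>L2 \<Omega>1. eop \<Omega>1 \<Omega>2 S f \<in> L2 \<Omega>1"
    using eop_simp L2_ind[OF O1 lop_L2[OF Sl L12]] by simp
  have p2: "\<forall>f\<in>L2 \<Omega>1. \<forall>g\<in>L2 \<Omega>1. (AE x in lborel. f x = g x) \<longrightarrow> (AE x in lborel. eop \<Omega>1 \<Omega>2 S f x = eop \<Omega>1 \<Omega>2 S g x)"
  proof (intro ballI impI)
    fix f g assume f: "f \<in> L2 \<Omega>1" and g: "g \<in> L2 \<Omega>1" and ae: "AE x in lborel. f x = g x"
    have "AE x in lborel. S f x = S g x" using lop_AE[OF Sl L12[OF f] L12[OF g] ae] .
    then show "AE x in lborel. eop \<Omega>1 \<Omega>2 S f x = eop \<Omega>1 \<Omega>2 S g x"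
      unfolding eop_simp[OF f] eop_simp[OF g] by eventually_elim simp
  qed
  have p3: "\<forall>f\<in>L2 \<Omega>1. \<forall>g\<in>L2 \<Omega>1. \<forall>a b::complex.
         AE x in lborel. eop \<Omega>1 \<Omega>2 S (\<lambda>y. a * f y + b * g y) x = a * eop \<Omega>1 \<Omega>2 S f x + b * eop \<Omega>1 \<Omega>2 S g x"
  proof (intro ballI allI)
    fix f g a b assume f: "f \<in> L2 \<Omega>1" and g: "g \<in> L2 \<Omega>1"
    have h: "(\<lambda>y. a * f y + b * g y) \<in> L2 \<Omega>1" using L2_add[OF L2_scale[OF f] L2_scale[OF g]] .
    have "AE x in lborel. S (\<lambda>y. a * f y + b * g y) x = a * S f x + b * S g x"
      using lop_lin[OF Sl L12[OF f] L12[OF g]] .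
    then show "AE x in lborel. eop \<Omega>1 \<Omega>2 S (\<lambda>y. a * f y + b * g y) x = a * eop \<Omega>1 \<Omega>2 S f x + b * eop \<Omega>1 \<Omega>2 S g x"
      unfolding eop_simp[OF f] eop_simp[OF g] eop_simp[OF h] by eventually_elim (simp add: algebra_simps)
  qed
  have p4: "\<forall>f\<in>L2 \<Omega>1. l2norm (eop \<Omega>1 \<Omega>2 S f) \<le> K * l2norm f"
  proof
    fix f assume f: "f \<in> L2 \<Omega>1"
    have "l2norm (eop \<Omega>1 \<Omega>2 S f) \<le> l2norm (S f)"
      unfolding eop_simp[OF f] by (rule l2norm_ind_le[OF lop_L2[OF Sl L12[OF f]] O1])
    also have "\<dots> \<le> K * l2norm f" using K L12[OF f] by blast
    finally show "l2norm (eop \<Omega>1 \<Omega>2 S f) \<le> K * l2norm f" .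
  qed
  show ?thesis unfolding bop_def using p1 p2 p3 p4 by blast
qed

lemma opnorm_iop:
  assumes O1: "\<Omega>1 \<in> sets borel" and sub: "\<Omega>1 \<subseteq> \<Omega>2"
  shows "opnorm \<Omega>2 (iop \<Omega>2 \<Omega>1 T) = opnorm \<Omega>1 T"
proof -
  have "(\<lambda>f. l2norm (iop \<Omega>2 \<Omega>1 T f)) ` {f \<in> L2 \<Omega>2. l2norm f \<le> 1} = (\<lambda>f. l2norm (T f)) ` {f \<in> L2 \<Omega>1. l2norm f \<le> 1}"
  proof (intro equalityI subsetI)
    fix t assume "t \<in> (\<lambda>f. l2norm (iop \<Omega>2 \<Omega>1 T f)) ` {f \<in> L2 \<Omega>2. l2norm f \<le> 1}"
    then obtain f where f: "f \<in> L2 \<Omega>2" "l2norm f \<le> 1" "t = l2norm (T (\<lambda>y. indicator \<Omega>1 y * f y))"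
      unfolding iop_def by auto
    have "(\<lambda>y. indicator \<Omega>1 y * f y) \<in> L2 \<Omega>1" using L2_ind[OF O1 f(1)] .
    moreover have "l2norm (\<lambda>y. indicator \<Omega>1 y * f y) \<le> 1" using l2norm_ind_le[OF f(1) O1] f(2) by simp
    ultimately show "t \<in> (\<lambda>f. l2norm (T f)) ` {f \<in> L2 \<Omega>1. l2norm f \<le> 1}" using f(3) by blast
  next
    fix t assume "t \<in> (\<lambda>f. l2norm (T f)) ` {f \<in> L2 \<Omega>1. l2norm f \<le> 1}"
    then obtain f where f: "f \<in> L2 \<Omega>1" "l2norm f \<le> 1" "t = l2norm (T f)" by auto
    have "iop \<Omega>2 \<Omega>1 T f = T f" unfolding iop_def using ind_L2_id[OF f(1)] by simp
    moreover have "f \<in> L2 \<Omega>2" using f(1) L2_mono[OF sub] by blast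
    ultimately show "t \<in> (\<lambda>f. l2norm (iop \<Omega>2 \<Omega>1 T f)) ` {f \<in> L2 \<Omega>2. l2norm f \<le> 1}" using f by force
  qed
  then show ?thesis unfolding opnorm_def by simp
qed

lemma opnorm_eop_le:
  assumes O1: "\<Omega>1 \<in> sets borel" and sub: "\<Omega>1 \<subseteq> \<Omega>2" and S: "bop \<Omega>2 S"
  shows "opnorm \<Omega>1 (eop \<Omega>1 \<Omega>2 S) \<le> opnorm \<Omega>2 S"
  unfolding opnorm_def
proof (rule cSup_least)
  show "(\<lambda>f. l2norm (eop \<Omega>1 \<Omega>2 S f)) ` {f \<in> L2 \<Omega>1. l2norm f \<le> 1} \<noteq> {}"
    using L2_zero[of \<Omega>1] by (auto simp: l2norm_def)
  obtain K where K0: "K \<ge> 0" and K: "\<forall>f\<in>L2 \<Omega>2. l2norm (S f) \<le> K * l2norm f" using bop_bound[OF S] by blast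
  have bdd: "bdd_above ((\<lambda>f. l2norm (S f)) ` {f \<in> L2 \<Omega>2. l2norm f \<le> 1})"
  proof (rule bdd_aboveI)
    fix t assume "t \<in> (\<lambda>f. l2norm (S f)) ` {f \<in> L2 \<Omega>2. l2norm f \<le> 1}"
    then obtain f where f: "f \<in> L2 \<Omega>2" "l2norm f \<le> 1" "t = l2norm (S f)" by auto
    have "t \<le> K * l2norm f" using K f by auto
    also have "\<dots> \<le> K" using K0 f(2) by (simp add: mult_left_le)
    finally show "t \<le> K" .
  qed
  fix t assume "t \<in> (\<lambda>f. l2norm (eop \<Omega>1 \<Omega>2 S f)) ` {f \<in> L2 \<Omega>1. l2norm f \<le> 1}"
  then obtain f where f: "f \<in> L2 \<Omega>1" "l2norm f \<le> 1" "t = l2norm (eop \<Omega>1 \<Omega>2 S f)" by auto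
  have f2: "f \<in> L2 \<Omega>2" using f(1) L2_mono[OF sub] by blast
  have "t \<le> l2norm (S f)" unfolding f(3) eop_simp[OF f(1)]
    by (rule l2norm_ind_le[OF lop_L2[OF bop_lop[OF S] f2] O1])
  also have "\<dots> \<le> Sup ((\<lambda>f. l2norm (S f)) ` {f \<in> L2 \<Omega>2. l2norm f \<le> 1})"
    using f2 f(2) by (intro cSup_upper[OF _ bdd]) auto
  finally show "t \<le> Sup ((\<lambda>f. l2norm (S f)) ` {f \<in> L2 \<Omega>2. l2norm f \<le> 1})" .
qed

lemma eop_iop:
  assumes T: "bop \<Omega>1 T"
  shows "op_eq \<Omega>1 (eop \<Omega>1 \<Omega>2 (iop \<Omega>2 \<Omega>1 T)) T"
  unfolding op_eq_def
proof (intro ballI AE_I2)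
  fix f x assume f: "f \<in> L2 \<Omega>1"
  have Tf: "T f \<in> L2 \<Omega>1" using T f unfolding bop_def by auto
  show "eop \<Omega>1 \<Omega>2 (iop \<Omega>2 \<Omega>1 T) f x = T f x"
  proof -
    have e1: "(\<lambda>y. indicator \<Omega>1 y * (indicator \<Omega>1 y * f y)) = (\<lambda>y. indicator \<Omega>1 y * f y)"
      by (auto simp: fun_eq_iff indicator_def)
    have "eop \<Omega>1 \<Omega>2 (iop \<Omega>2 \<Omega>1 T) f x = indicator \<Omega>1 x * T f x"
      unfolding eop_def iop_def e1 ind_L2_id[OF f] ..
    also have "\<dots> = T f x" using fun_cong[OF ind_L2_id[OF Tf], of x] by simp
    finally show ?thesis .
  qed
qed



lemma Lip1_Linf: "Lip1 \<Omega> f \<Longrightarrow> Linf \<Omega> f" by (simp add: Lip1_def)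

lemma commut_iop_eq:
  "commut (Mult g) (iop \<Omega>2 \<Omega>1 T) = (\<lambda>e. commut (Mult g) T (\<lambda>y. indicator \<Omega>1 y * e y))"
  unfolding commut_def Mult_def iop_def by (simp add: fun_eq_iff mult.left_commute)

lemma commut_iop_UU_eq:
  "commut (iop \<Omega>2 \<Omega>1 T) (UU w) = (\<lambda>e. commut T (UU w) (\<lambda>y. indicator \<Omega>1 y * e y))"
  unfolding commut_def UU_def Mult_def iop_def by (simp add: fun_eq_iff mult.left_commute)

lemma hs_change_f:
  assumes T: "lop \<Omega>1 T" and f: "Linf \<Omega>1 f" and g: "Linf \<Omega>1 g"
    and ae: "AE x in lborel. x \<in> \<Omega>1 \<longrightarrow> g x = f x"
  shows "hs_norm \<Omega>1 (commut (Mult f) T) = hs_norm \<Omega>1 (commut (Mult g) T)"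
proof (rule hs_cong)
  fix e assume e: "e \<in> L2 \<Omega>1"
  show "commut (Mult f) T e \<in> borel_measurable lborel"
    using lop_L2[OF lop_commut_Mult[OF T f] e] by (rule L2_meas)
  show "commut (Mult g) T e \<in> borel_measurable lborel"
    using lop_L2[OF lop_commut_Mult[OF T g] e] by (rule L2_meas)
  have Te: "T e \<in> L2 \<Omega>1" using lop_L2[OF T e] .
  have "AE x in lborel. f x * e x = g x * e x"
    using ae by eventually_elim (use e in \<open>auto simp: L2_def\<close>)
  then have a2: "AE x in lborel. T (\<lambda>y. f y * e y) x = T (\<lambda>y. g y * e y) x"
    using lop_AE[OF T L2_mult_Linf[OF f e] L2_mult_Linf[OF g e]] by simp
  show "AE x in lborel. commut (Mult f) T e x = commut (Mult g) T e x"
    using ae a2 unfolding commut_def Mult_def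
    by eventually_elim (use Te in \<open>auto simp: L2_def\<close>)
qed

lemma LL_iop:
  assumes O1: "\<Omega>1 \<in> sets borel" and sub: "\<Omega>1 \<subseteq> \<Omega>2" and T: "bop \<Omega>1 T"
  shows "LL \<Omega>2 (iop \<Omega>2 \<Omega>1 T) = LL \<Omega>1 T"
proof (rule antisym)
  have Tl: "lop \<Omega>1 T" using T by (rule bop_lop)
  show "LL \<Omega>2 (iop \<Omega>2 \<Omega>1 T) \<le> LL \<Omega>1 T"
    unfolding LL_def[of \<Omega>2]
  proof (rule SUP_least)
    fix g assume "g \<in> {f. Lip1 \<Omega>2 f}"
    then have g1: "Lip1 \<Omega>1 g" using Lip1_mono[OF sub] by auto
    have "hs_norm \<Omega>2 (commut (Mult g) (iop \<Omega>2 \<Omega>1 T)) = hs_norm \<Omega>1 (commut (Mult g) T)"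
      unfolding commut_iop_eq by (rule hs_proj[OF O1 sub lop_commut_Mult[OF Tl Lip1_Linf[OF g1]]])
    also have "\<dots> \<le> LL \<Omega>1 T" unfolding LL_def using g1 by (intro SUP_upper) auto
    finally show "hs_norm \<Omega>2 (commut (Mult g) (iop \<Omega>2 \<Omega>1 T)) \<le> LL \<Omega>1 T" .
  qed
  show "LL \<Omega>1 T \<le> LL \<Omega>2 (iop \<Omega>2 \<Omega>1 T)"
    unfolding LL_def[of \<Omega>1]
  proof (rule SUP_least)
    fix f assume "f \<in> {f. Lip1 \<Omega>1 f}"
    then have f: "Lip1 \<Omega>1 f" by simp
    obtain g where g: "Lip1 \<Omega>2 g" and ae: "AE x in lborel. x \<in> \<Omega>1 \<longrightarrow> g x = f x"
      using lip_extend[OF O1 f] by blast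
    have g1: "Lip1 \<Omega>1 g" using Lip1_mono[OF sub g] .
    have "hs_norm \<Omega>1 (commut (Mult f) T) = hs_norm \<Omega>1 (commut (Mult g) T)"
      by (rule hs_change_f[OF Tl Lip1_Linf[OF f] Lip1_Linf[OF g1] ae])
    also have "\<dots> = hs_norm \<Omega>2 (commut (Mult g) (iop \<Omega>2 \<Omega>1 T))"
      unfolding commut_iop_eq by (rule hs_proj[OF O1 sub lop_commut_Mult[OF Tl Lip1_Linf[OF g1]], symmetric])
    also have "\<dots> \<le> LL \<Omega>2 (iop \<Omega>2 \<Omega>1 T)" unfolding LL_def using g by (intro SUP_upper) auto
    finally show "hs_norm \<Omega>1 (commut (Mult f) T) \<le> LL \<Omega>2 (iop \<Omega>2 \<Omega>1 T)" .
  qed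
qed

lemma LL1_iop:
  assumes O1: "\<Omega>1 \<in> sets borel" and sub: "\<Omega>1 \<subseteq> \<Omega>2" and T: "bop \<Omega>1 T"
  shows "LL1 \<Omega>2 (iop \<Omega>2 \<Omega>1 T) = LL1 \<Omega>1 T"
  unfolding LL1_def
proof (intro SUP_cong refl arg_cong2[where f="(*)"])
  fix w
  show "hs_norm \<Omega>2 (commut (iop \<Omega>2 \<Omega>1 T) (UU w)) = hs_norm \<Omega>1 (commut T (UU w))"
    unfolding commut_iop_UU_eq by (rule hs_proj[OF O1 sub lop_commut_UU[OF bop_lop[OF T]]])
qed

lemma LL_eop_le:
  assumes O1: "\<Omega>1 \<in> sets borel" and sub: "\<Omega>1 \<subseteq> \<Omega>2" and S: "bop \<Omega>2 S"
  shows "LL \<Omega>1 (eop \<Omega>1 \<Omega>2 S) \<le> LL \<Omega>2 S"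
  unfolding LL_def[of \<Omega>1]
proof (rule SUP_least)
  have Sl: "lop \<Omega>2 S" using S by (rule bop_lop)
  have L12: "h \<in> L2 \<Omega>2" if "h \<in> L2 \<Omega>1" for h using L2_mono[OF sub] that by blast
  fix f assume "f \<in> {f. Lip1 \<Omega>1 f}"
  then have f: "Lip1 \<Omega>1 f" by simp
  obtain g where g: "Lip1 \<Omega>2 g" and ae: "AE x in lborel. x \<in> \<Omega>1 \<longrightarrow> g x = f x"
    using lip_extend[OF O1 f] by blast
  have g1: "Linf \<Omega>1 g" using Lip1_Linf[OF Lip1_mono[OF sub g]] .
  have "hs_norm \<Omega>1 (commut (Mult f) (eop \<Omega>1 \<Omega>2 S)) \<le> hs_norm \<Omega>2 (commut (Mult g) S)"
  proof (rule hs_mono[OF sub])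
    fix e assume e: "e \<in> L2 \<Omega>1"
    have fe: "(\<lambda>y. f y * e y) \<in> L2 \<Omega>1" using L2_mult_Linf[OF Lip1_Linf[OF f] e] .
    have ge: "(\<lambda>y. g y * e y) \<in> L2 \<Omega>1" using L2_mult_Linf[OF g1 e] .
    have eq: "commut (Mult f) (eop \<Omega>1 \<Omega>2 S) e = (\<lambda>x. f x * (indicator \<Omega>1 x * S e x) - indicator \<Omega>1 x * S (\<lambda>y. f y * e y) x)"
      unfolding commut_def Mult_def eop_simp[OF e] eop_simp[OF fe] ..
    have "AE x in lborel. f x * e x = g x * e x"
      using ae by eventually_elim (use e in \<open>auto simp: L2_def\<close>)
    then have a2: "AE x in lborel. S (\<lambda>y. f y * e y) x = S (\<lambda>y. g y * e y) x"
      using lop_AE[OF Sl L12[OF fe] L12[OF ge]] by simp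
    have YL: "commut (Mult g) S e \<in> L2 \<Omega>2"
      using lop_L2[OF lop_commut_Mult[OF Sl Lip1_Linf[OF g]] L12[OF e]] .
    show "l2norm (commut (Mult f) (eop \<Omega>1 \<Omega>2 S) e) \<le> l2norm (commut (Mult g) S e)"
    proof (rule l2norm_mono_AE[OF _ YL])
      show "commut (Mult f) (eop \<Omega>1 \<Omega>2 S) e \<in> borel_measurable lborel"
        using lop_L2[OF lop_commut_Mult[OF bop_lop[OF bop_eop[OF O1 sub S]] Lip1_Linf[OF f]] e] by (rule L2_meas)
      show "AE x in lborel. cmod (commut (Mult f) (eop \<Omega>1 \<Omega>2 S) e x) \<le> cmod (commut (Mult g) S e x)"
        unfolding eq using ae a2
      proof eventually_elim
        case (elim x)
        show ?case
        proof (cases "x \<in> \<Omega>1")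
          case True then show ?thesis using elim by (simp add: commut_def Mult_def)
        next
          case False then show ?thesis by simp
        qed
      qed
    qed
  qed
  also have "\<dots> \<le> LL \<Omega>2 S" unfolding LL_def using g by (intro SUP_upper) auto
  finally show "hs_norm \<Omega>1 (commut (Mult f) (eop \<Omega>1 \<Omega>2 S)) \<le> LL \<Omega>2 S" .
qed

lemma LL1_eop_le:
  assumes O1: "\<Omega>1 \<in> sets borel" and sub: "\<Omega>1 \<subseteq> \<Omega>2" and S: "bop \<Omega>2 S"
  shows "LL1 \<Omega>1 (eop \<Omega>1 \<Omega>2 S) \<le> LL1 \<Omega>2 S"
  unfolding LL1_def
proof (rule SUP_mono)
  have Sl: "lop \<Omega>2 S" using S by (rule bop_lop)
  have L12: "h \<in> L2 \<Omega>2" if "h \<in> L2 \<Omega>1" for h using L2_mono[OF sub] that by blast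
  fix w :: complex assume w: "w \<in> {w. w \<noteq> 0}"
  have "hs_norm \<Omega>1 (commut (eop \<Omega>1 \<Omega>2 S) (UU w)) \<le> hs_norm \<Omega>2 (commut S (UU w))"
  proof (rule hs_mono[OF sub])
    fix e assume e: "e \<in> L2 \<Omega>1"
    have ee: "(\<lambda>y. ee w y * e y) \<in> L2 \<Omega>1" using L2_mult_Linf[OF Linf_ee e] .
    have eq: "commut (eop \<Omega>1 \<Omega>2 S) (UU w) e = (\<lambda>x. indicator \<Omega>1 x * commut S (UU w) e x)"
      unfolding commut_def UU_def Mult_def eop_simp[OF e] eop_simp[OF ee] by (simp add: fun_eq_iff algebra_simps)
    show "l2norm (commut (eop \<Omega>1 \<Omega>2 S) (UU w) e) \<le> l2norm (commut S (UU w) e)"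
      unfolding eq by (rule l2norm_ind_le[OF lop_L2[OF lop_commut_UU[OF Sl] L12[OF e]] O1])
  qed
  then have "ennreal (1 / cmod w) * hs_norm \<Omega>1 (commut (eop \<Omega>1 \<Omega>2 S) (UU w))
      \<le> ennreal (1 / cmod w) * hs_norm \<Omega>2 (commut S (UU w))"
    by (rule mult_left_mono) simp
  then show "\<exists>m\<in>{w. w \<noteq> 0}. ennreal (1 / cmod w) * hs_norm \<Omega>1 (commut (eop \<Omega>1 \<Omega>2 S) (UU w))
      \<le> ennreal (1 / cmod m) * hs_norm \<Omega>2 (commut S (UU m))" using w by blast
qed


theorem proposition3p7:
  fixes \<Omega>1 \<Omega>2 :: "complex set"
  assumes "\<Omega>1 \<in> sets borel" and "\<Omega>2 \<in> sets borel" and "\<Omega>1 \<subseteq> \<Omega>2"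
  shows "iop \<Omega>2 \<Omega>1 ` EL \<Omega>1 \<subseteq> EL \<Omega>2
    \<and> (\<forall>T\<in>EL \<Omega>1. tnorm \<Omega>2 (iop \<Omega>2 \<Omega>1 T) = tnorm \<Omega>1 T
                 \<and> tnorm1 \<Omega>2 (iop \<Omega>2 \<Omega>1 T) = tnorm1 \<Omega>1 T
                 \<and> LL \<Omega>2 (iop \<Omega>2 \<Omega>1 T) = LL \<Omega>1 T
                 \<and> LL1 \<Omega>2 (iop \<Omega>2 \<Omega>1 T) = LL1 \<Omega>1 T)
    \<and> eop \<Omega>1 \<Omega>2 ` EL \<Omega>2 \<subseteq> EL \<Omega>1
    \<and> (\<forall>T\<in>EL \<Omega>1. \<exists>S\<in>EL \<Omega>2. op_eq \<Omega>1 (eop \<Omega>1 \<Omega>2 S) T)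
    \<and> (\<forall>S\<in>EL \<Omega>2. tnorm \<Omega>1 (eop \<Omega>1 \<Omega>2 S) \<le> tnorm \<Omega>2 S
                 \<and> tnorm1 \<Omega>1 (eop \<Omega>1 \<Omega>2 S) \<le> tnorm1 \<Omega>2 S)
    \<and> (\<forall>T. bop \<Omega>1 T \<longrightarrow> op_eq \<Omega>1 (eop \<Omega>1 \<Omega>2 (iop \<Omega>2 \<Omega>1 T)) T)"
proof -
  note O1 = assms(1) and sub = assms(3)
  have A: "iop \<Omega>2 \<Omega>1 T \<in> EL \<Omega>2" if T: "T \<in> EL \<Omega>1" for T
  proof -
    have b: "bop \<Omega>1 T" and l: "LL \<Omega>1 T < \<infinity>" using T unfolding EL_def by auto
    show ?thesis unfolding EL_def using bop_iop[OF O1 sub b] LL_iop[OF O1 sub b] l by simp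
  qed
  have B: "tnorm \<Omega>2 (iop \<Omega>2 \<Omega>1 T) = tnorm \<Omega>1 T \<and> tnorm1 \<Omega>2 (iop \<Omega>2 \<Omega>1 T) = tnorm1 \<Omega>1 T
     \<and> LL \<Omega>2 (iop \<Omega>2 \<Omega>1 T) = LL \<Omega>1 T \<and> LL1 \<Omega>2 (iop \<Omega>2 \<Omega>1 T) = LL1 \<Omega>1 T" if T: "T \<in> EL \<Omega>1" for T
  proof -
    have b: "bop \<Omega>1 T" using T unfolding EL_def by auto
    show ?thesis unfolding tnorm_def tnorm1_def
      using opnorm_iop[OF O1 sub, of T] LL_iop[OF O1 sub b] LL1_iop[OF O1 sub b] by simp
  qed
  have C: "eop \<Omega>1 \<Omega>2 S \<in> EL \<Omega>1" if S: "S \<in> EL \<Omega>2" for S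
  proof -
    have b: "bop \<Omega>2 S" and l: "LL \<Omega>2 S < \<infinity>" using S unfolding EL_def by auto
    show ?thesis unfolding EL_def using bop_eop[OF O1 sub b] LL_eop_le[OF O1 sub b] l
      by (auto intro: le_less_trans)
  qed
  have E: "tnorm \<Omega>1 (eop \<Omega>1 \<Omega>2 S) \<le> tnorm \<Omega>2 S \<and> tnorm1 \<Omega>1 (eop \<Omega>1 \<Omega>2 S) \<le> tnorm1 \<Omega>2 S"
    if S: "S \<in> EL \<Omega>2" for S
  proof -
    have b: "bop \<Omega>2 S" using S unfolding EL_def by auto
    have o: "ennreal (opnorm \<Omega>1 (eop \<Omega>1 \<Omega>2 S)) \<le> ennreal (opnorm \<Omega>2 S)"
      using opnorm_eop_le[OF O1 sub b] by (rule ennreal_leI)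
    show ?thesis unfolding tnorm_def tnorm1_def
      using add_mono[OF o LL_eop_le[OF O1 sub b]] add_mono[OF o LL1_eop_le[OF O1 sub b]] by simp
  qed
  have F: "op_eq \<Omega>1 (eop \<Omega>1 \<Omega>2 (iop \<Omega>2 \<Omega>1 T)) T" if "bop \<Omega>1 T" for T
    using eop_iop[OF that] .
  have D: "\<exists>S\<in>EL \<Omega>2. op_eq \<Omega>1 (eop \<Omega>1 \<Omega>2 S) T" if T: "T \<in> EL \<Omega>1" for T
    using A[OF T] F T unfolding EL_def by blast
  show ?thesis using A B C D E F by blast
qed


end
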